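(* Under the standing model and assumptions below, and assuming $E(\Vert\varepsilon\Vert^2)<\infty$, for every parameter $W\in\Theta_s$, \[ U_n(W)-U_n(W^0)\xrightarrow{\text{a.s.}} K(W,W^0):=\ln\det\Gamma(W)-\ln\det\Gamma(W^0)\quad (n\to\infty), \] and $K(W,W^0)\ge 0$, with $K(W,W^0)=0$ if and only if $W=W^0$ (equality understood in the quotient parameter space, i.e. up to the finite group of weight transformations leaving the MLP function invariant).
   Context: Let $(Y_t,Z_t)_{t\in\mathbb N}$ be i.i.d. random vectors in $\mathbb R^d\times\mathbb R^{d'}$, each with the law of a generic pair $(Y,Z)$. The model is $Y_t=F_{W^0}(Z_t)+\varepsilon_t$, where for a weight vector $W$, $F_W:\mathbb R^{d'}\to\mathbb R^d$ is the function computed by a one-hidden-layer multilayer perceptron with weights $W$ and sigmoidal activation functions in the hidden units, and $W^0$ is the true weight vector. The noise $(\varepsilon_t)$ is i.i.d., centered, independent of the inputs $(Z_t)$, with invertible covariance matrix; $\varepsilon$ denotes a generic variable with the law of $\varepsilon_t$. The parameter set $\Theta_s\subset\mathbb R^s$ is compact, and contains $W^0$. Parameters are considered modulo the finite group of weight transformations leaving $F_W$ invariant, and the model is assumed identifiable in this quotient space: $F_W=F_{W^0}$ almost surely on the support of $Z$ implies $W=W^0$ (e.g. the number of hidden units is the true one). Define \[ \Gamma_n(W)=\frac1n\sum_{t=1}^n (Y_t-F_W(Z_t))(Y_t-F_W(Z_t))^T,\qquad U_n(W)=\ln\det\Gamma_n(W), \] and $\Gamma(W)=E\big[(Y-F_W(Z))(Y-F_W(Z))^T\big]$,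 so $\Gamma(W^0)$ is the (invertible) noise covariance. *)

theory Defs
  imports "HOL-Probability.Probability"
begin

definition sigmoidal :: "(real \<Rightarrow> real) \<Rightarrow> bool" where
  "sigmoidal \<sigma> \<longleftrightarrow> continuous_on UNIV \<sigma> \<and> mono \<sigma> \<and>
     (\<exists>a b. a < b \<and> (\<sigma> \<longlongrightarrow> a) at_bot \<and> (\<sigma> \<longlongrightarrow> b) at_top)"

definition outer :: "real^'n \<Rightarrow> real^'n \<Rightarrow> real^'n^'n" where
  "outer v w = (\<chi> i j. v $ i * w $ j)"

definition mlp :: "(real \<Rightarrow> real) \<Rightarrow> ((real^'p^'h) \<times> (real^'h) \<times> (real^'h^'d) \<times> (real^'d))
    \<Rightarrow> real^'p \<Rightarrow> real^'d" where
  "mlp \<sigma> W z = (case W of (A, c, B, b) \<Rightarrow> B *v (\<chi> h. \<sigma> ((A $ h) \<bullet> z + c $ h)) + b)"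

definition emp_cov :: "(real^'p \<Rightarrow> real^'d) \<Rightarrow> (nat \<Rightarrow> 'a \<Rightarrow> real^'d) \<Rightarrow> (nat \<Rightarrow> 'a \<Rightarrow> real^'p)
    \<Rightarrow> nat \<Rightarrow> 'a \<Rightarrow> real^'d^'d" where
  "emp_cov f Y Z n x = (1 / real n) *\<^sub>R (\<Sum>t\<in>{1..n}. outer (Y t x - f (Z t x)) (Y t x - f (Z t x)))"

definition U_n :: "(real^'p \<Rightarrow> real^'d) \<Rightarrow> (nat \<Rightarrow> 'a \<Rightarrow> real^'d) \<Rightarrow> (nat \<Rightarrow> 'a \<Rightarrow> real^'p)
    \<Rightarrow> nat \<Rightarrow> 'a \<Rightarrow> real" where
  "U_n f Y Z n x = ln (det (emp_cov f Y Z n x))"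

definition pop_cov :: "'a measure \<Rightarrow> (real^'p \<Rightarrow> real^'d) \<Rightarrow> ('a \<Rightarrow> real^'d) \<Rightarrow> ('a \<Rightarrow> real^'p)
    \<Rightarrow> real^'d^'d" where
  "pop_cov M f Y Z = (\<chi> i j. integral\<^sup>L M (\<lambda>x. (Y x - f (Z x)) $ i * (Y x - f (Z x)) $ j))"

definition K_contrast :: "'a measure \<Rightarrow> (real^'p \<Rightarrow> real^'d) \<Rightarrow> (real^'p \<Rightarrow> real^'d)
    \<Rightarrow> ('a \<Rightarrow> real^'d) \<Rightarrow> ('a \<Rightarrow> real^'p) \<Rightarrow> real" where
  "K_contrast M f f0 Y Z = ln (det (pop_cov M f Y Z)) - ln (det (pop_cov M f0 Y Z))"

end

theory Submission
  imports Defs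
begin

lemma cesaro_lim:
  fixes a :: "nat \<Rightarrow> real"
  assumes "a \<longlonglongrightarrow> L"
  shows "(\<lambda>n. (\<Sum>k\<in>{1..n}. a k) / real n) \<longlonglongrightarrow> L"
proof (rule LIMSEQ_I)
  fix e :: real assume e: "0 < e"
  define b where "b k = a k - L" for k
  from assms have "b \<longlonglongrightarrow> 0" unfolding b_def using tendsto_diff[OF assms tendsto_const[of L]] by simp
  then obtain N where N: "\<And>k. k \<ge> N \<Longrightarrow> \<bar>b k\<bar> < e/2"
    using e by (metis LIMSEQ_D diff_zero half_gt_zero real_norm_def)
  define B where "B = (\<Sum>k\<in>{1..N}. \<bar>b k\<bar>)"
  have B0: "B \<ge> 0" unfolding B_def by (simp add: sum_nonneg)
  obtain N2 :: nat where N2: "real N2 > 2*B/e" using reals_Archimedean2 by blast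
  show "\<exists>no. \<forall>n\<ge>no. norm ((\<Sum>k\<in>{1..n}. a k) / real n - L) < e"
  proof (intro exI allI impI)
    fix n assume n: "n \<ge> max (max N N2) 1"
    then have npos: "real n > 0" by auto
    have eq: "(\<Sum>k\<in>{1..n}. a k) / real n - L = (\<Sum>k\<in>{1..n}. b k) / real n"
      using npos by (simp add: b_def sum_subtractf field_simps)
    have split: "{1..n} = {1..N} \<union> {N<..n}" using n by auto
    have "\<bar>\<Sum>k\<in>{1..n}. b k\<bar> \<le> (\<Sum>k\<in>{1..n}. \<bar>b k\<bar>)" by (rule sum_abs)
    also have "\<dots> = B + (\<Sum>k\<in>{N<..n}. \<bar>b k\<bar>)"
      unfolding B_def split by (subst sum.union_disjoint) auto
    also have "(\<Sum>k\<in>{N<..n}. \<bar>b k\<bar>) \<le> (\<Sum>k\<in>{N<..n}. e/2)"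
      by (intro sum_mono less_imp_le N) auto
    also have "\<dots> \<le> real n * (e/2)" using e n by auto
    finally have le: "\<bar>\<Sum>k\<in>{1..n}. b k\<bar> \<le> B + real n * (e/2)" by simp
    have "B < real n * (e/2)"
    proof -
      have "2*B/e < real n" using N2 n by auto
      then show ?thesis using e by (simp add: field_simps)
    qed
    with le have "\<bar>\<Sum>k\<in>{1..n}. b k\<bar> < real n * e" by linarith
    then show "norm ((\<Sum>k\<in>{1..n}. a k) / real n - L) < e"
      unfolding eq using npos by (simp add: abs_div pos_divide_less_eq mult.commute)
  qed
qed

lemma geom_tail_bound:
  fixes \<alpha> r :: real
  assumes a: "\<alpha> > 1" and r: "r \<ge> 0"
  shows "(\<Sum>j<N. if r \<le> \<alpha>^j then r^2/\<alpha>^j else 0) \<le> r * \<alpha> / (\<alpha> - 1)"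
proof (cases "r = 0")
  case True then have "\<And>j. (if r \<le> \<alpha>^j then r^2/\<alpha>^j else 0) = (0::real)" by simp
  then show ?thesis using True by simp
next
  case False
  then have rp: "r > 0" using r by auto
  define g where "g j = min (1/r) (1/\<alpha>^j)" for j :: nat
  have step: "(if r \<le> \<alpha>^j then r^2/\<alpha>^j else 0) \<le> r^2 * \<alpha>/(\<alpha>-1) * (g j - g (Suc j))" for j
  proof (cases "r \<le> \<alpha>^j")
    case True
    have p: "\<alpha>^j > 0" using a by auto
    have g1: "g j = 1/\<alpha>^j" unfolding g_def using True rp p by (simp add: min_def field_simps)
    have "\<alpha>^j \<le> \<alpha>^Suc j" using a by auto
    then have "r \<le> \<alpha>^Suc j" using True by linarith
    then have g2: "g (Suc j) = 1/\<alpha>^Suc j" unfolding g_def using rp a by (simp add: min_def field_simps)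
    have "r^2 * \<alpha>/(\<alpha>-1) * (g j - g (Suc j)) = r^2/\<alpha>^j" unfolding g1 g2 using a p by (simp add: field_simps)
    then show ?thesis using True by simp
  next
    case False
    have "1/\<alpha>^Suc j \<le> 1/\<alpha>^j" using a by (simp add: divide_simps)
    then have "g (Suc j) \<le> g j" unfolding g_def by (simp add: min_def)
    then show ?thesis using False a by (simp add: mult_nonneg_nonneg)
  qed
  have "(\<Sum>j<N. if r \<le> \<alpha>^j then r^2/\<alpha>^j else 0) \<le> (\<Sum>j<N. r^2 * \<alpha>/(\<alpha>-1) * (g j - g (Suc j)))"
    by (intro sum_mono step)
  also have "\<dots> = r^2 * \<alpha>/(\<alpha>-1) * (g 0 - g N)"
    by (subst sum_distrib_left[symmetric]) (simp add: sum_lessThan_telescope')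
  also have "\<dots> \<le> r^2 * \<alpha>/(\<alpha>-1) * (1/r)"
  proof -
    have "g N \<ge> 0" unfolding g_def using rp a by auto
    moreover have "g 0 \<le> 1/r" unfolding g_def by auto
    ultimately show ?thesis using a by (intro mult_left_mono) auto
  qed
  also have "\<dots> = r * \<alpha> / (\<alpha> - 1)" using rp by (simp add: power2_eq_square)
  finally show ?thesis .
qed

lemma interp_lemma:
  fixes T :: "nat \<Rightarrow> real" and k :: "nat \<Rightarrow> nat"
  assumes monoT: "\<And>m n. m \<le> n \<Longrightarrow> T m \<le> T n" and T0: "\<And>n. T n \<ge> 0"
    and k1: "\<And>j. k j \<ge> 1" and kinf: "filterlim k at_top sequentially"
    and lim1: "(\<lambda>j. T (k j) / real (k j)) \<longlonglongrightarrow> \<mu>"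
    and lim2: "(\<lambda>j. real (k (Suc j)) / real (k j)) \<longlonglongrightarrow> \<alpha>"
    and a: "\<alpha> > 0" and \<delta>: "\<delta> > 0"
  shows "eventually (\<lambda>n. \<mu>/\<alpha> - \<delta> < T n / real n \<and> T n / real n < \<alpha>*\<mu> + \<delta>) sequentially"
proof -
  have "(\<lambda>j. T (k (Suc j)) / real (k (Suc j)) * (real (k (Suc j)) / real (k j))) \<longlonglongrightarrow> \<mu> * \<alpha>"
    using tendsto_mult[OF lim1[THEN LIMSEQ_Suc] lim2] .
  moreover have "T (k (Suc j)) / real (k (Suc j)) * (real (k (Suc j)) / real (k j)) = T (k (Suc j)) / real (k j)" for j
    using k1[of "Suc j"] by (simp add: field_simps)
  ultimately have u: "(\<lambda>j. T (k (Suc j)) / real (k j)) \<longlonglongrightarrow> \<alpha> * \<mu>" by (simp add: mult.commute)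
  have "(\<lambda>j. (T (k j) / real (k j)) / (real (k (Suc j)) / real (k j))) \<longlonglongrightarrow> \<mu> / \<alpha>"
    using tendsto_divide[OF lim1 lim2] a by simp
  moreover have "(\<lambda>j. (T (k j) / real (k j)) / (real (k (Suc j)) / real (k j))) = (\<lambda>j. T (k j) / real (k (Suc j)))"
  proof (rule ext)
    fix j show "(T (k j) / real (k j)) / (real (k (Suc j)) / real (k j)) = T (k j) / real (k (Suc j))"
      using k1[of j] k1[of "Suc j"] by (simp add: field_simps)
  qed
  ultimately have l: "(\<lambda>j. T (k j) / real (k (Suc j))) \<longlonglongrightarrow> \<mu> / \<alpha>" by simp
  have "eventually (\<lambda>j. T (k (Suc j)) / real (k j) < \<alpha> * \<mu> + \<delta>) sequentially"
    using order_tendstoD(2)[OF u] \<delta> by simp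
  moreover have "eventually (\<lambda>j. \<mu>/\<alpha> - \<delta> < T (k j) / real (k (Suc j))) sequentially"
    using order_tendstoD(1)[OF l] \<delta> by simp
  ultimately obtain J where J: "\<And>j. j \<ge> J \<Longrightarrow> T (k (Suc j)) / real (k j) < \<alpha> * \<mu> + \<delta> \<and> \<mu>/\<alpha> - \<delta> < T (k j) / real (k (Suc j))"
    unfolding eventually_sequentially by (metis (no_types, lifting) eventually_conj eventually_sequentially)
  show ?thesis unfolding eventually_sequentially
  proof (intro exI allI impI)
    fix n assume n: "n \<ge> k J"
    have "eventually (\<lambda>j. Suc n \<le> k j) sequentially" using kinf unfolding filterlim_at_top by auto
    then have "eventually (\<lambda>j. k j > n) sequentially" by (rule eventually_mono) auto
    then obtain N where N: "\<And>j. j \<ge> N \<Longrightarrow> k j > n" unfolding eventually_sequentially by auto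
    define S where "S = {j. k j \<le> n}"
    have finS: "finite S" unfolding S_def
      by (rule finite_subset[of _ "{..<N}"]) (use N in \<open>force simp: not_less[symmetric]\<close>)+
    have JS: "J \<in> S" using n unfolding S_def by auto
    define j where "j = Max S"
    have jS: "j \<in> S" unfolding j_def using finS JS by (intro Max_in) auto
    have Jj: "J \<le> j" unfolding j_def using finS JS by auto
    have nk: "k (Suc j) > n"
    proof (rule ccontr)
      assume "\<not> ?thesis" then have "Suc j \<in> S" unfolding S_def by auto
      then have "Suc j \<le> j" unfolding j_def using finS by auto
      then show False by simp
    qed
    have kj: "k j \<le> n" using jS unfolding S_def by auto
    have kjp: "real (k j) > 0" using k1[of j] by auto
    have np: "real n > 0" using kj k1[of j] by auto
    have "T n / real n \<le> T (k (Suc j)) / real (k j)"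
      using monoT[of n "k (Suc j)"] nk kj T0[of "k (Suc j)"] kjp np
      by (intro frac_le) auto
    moreover have "T (k j) / real (k (Suc j)) \<le> T n / real n"
      using monoT[of "k j" n] nk kj T0[of "k j"] kjp np
      by (intro frac_le) auto
    ultimately show "\<mu>/\<alpha> - \<delta> < T n / real n \<and> T n / real n < \<alpha>*\<mu> + \<delta>"
      using J[OF Jj] by linarith
  qed
qed

definition kseq :: "real \<Rightarrow> nat \<Rightarrow> nat" where "kseq \<alpha> j = nat \<lfloor>\<alpha>^j\<rfloor>"

lemma kseq_props:
  assumes a: "\<alpha> > 1"
  shows "kseq \<alpha> j \<ge> 1" "real (kseq \<alpha> j) \<le> \<alpha>^j" "\<alpha>^j \<le> 2 * real (kseq \<alpha> j)"
proof -
  have ge: "\<alpha>^j \<ge> 1" using a by auto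
  then have f1: "\<lfloor>\<alpha>^j\<rfloor> \<ge> 1" by linarith
  then show "kseq \<alpha> j \<ge> 1" unfolding kseq_def by linarith
  show "real (kseq \<alpha> j) \<le> \<alpha>^j" unfolding kseq_def using f1 by linarith
  have "real_of_int \<lfloor>\<alpha>^j\<rfloor> > \<alpha>^j - 1" by linarith
  then show "\<alpha>^j \<le> 2 * real (kseq \<alpha> j)" unfolding kseq_def using f1 by linarith
qed

lemma kseq_mono:
  assumes a: "\<alpha> > 1" and "i \<le> j" shows "kseq \<alpha> i \<le> kseq \<alpha> j"
proof -
  have "\<alpha>^i \<le> \<alpha>^j" using assms by (intro power_increasing) auto
  then show ?thesis unfolding kseq_def by (intro nat_mono floor_mono)
qed

lemma kseq_ratio:
  assumes a: "\<alpha> > 1"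
  shows "(\<lambda>j. real (kseq \<alpha> j) / \<alpha>^j) \<longlonglongrightarrow> 1"
proof -
  have "(\<lambda>j. 1 - (1/\<alpha>)^j) \<longlonglongrightarrow> 1 - 0"
    using a by (intro tendsto_diff tendsto_const LIMSEQ_power_zero) auto
  then have lo: "(\<lambda>j. 1 - (1/\<alpha>)^j) \<longlonglongrightarrow> 1" by simp
  show ?thesis
  proof (rule real_tendsto_sandwich[OF _ _ lo tendsto_const[of 1]])
    show "\<forall>\<^sub>F j in sequentially. 1 - (1/\<alpha>)^j \<le> real (kseq \<alpha> j) / \<alpha>^j"
    proof (intro always_eventually allI)
      fix j
      have p: "\<alpha>^j > 0" using a by auto
      have f1: "\<lfloor>\<alpha>^j\<rfloor> \<ge> 1" using a by (simp add: one_le_power)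
      have "real_of_int \<lfloor>\<alpha>^j\<rfloor> > \<alpha>^j - 1" by linarith
      then have "real (kseq \<alpha> j) \<ge> \<alpha>^j - 1" unfolding kseq_def using f1 by linarith
      then have "(\<alpha>^j - 1)/\<alpha>^j \<le> real (kseq \<alpha> j) / \<alpha>^j"
        using p by (intro divide_right_mono) auto
      moreover have "1 - (1/\<alpha>)^j = (\<alpha>^j - 1)/\<alpha>^j" using p a by (simp add: power_divide diff_divide_distrib)
      ultimately show "1 - (1/\<alpha>)^j \<le> real (kseq \<alpha> j) / \<alpha>^j" by simp
    qed
    show "\<forall>\<^sub>F j in sequentially. real (kseq \<alpha> j) / \<alpha>^j \<le> 1"
      using kseq_props(2)[OF a] a by (intro always_eventually allI) (simp add: divide_le_eq_1)
  qed
qed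

lemma kseq_lim:
  assumes a: "\<alpha> > 1"
  shows "filterlim (kseq \<alpha>) at_top sequentially"
    "(\<lambda>j. real (kseq \<alpha> (Suc j)) / real (kseq \<alpha> j)) \<longlonglongrightarrow> \<alpha>"
proof -
  have "filterlim (\<lambda>j. \<alpha>^j) at_top sequentially" using a by (intro filterlim_at_infinity_imp_filterlim_at_top filterlim_realpow_sequentially_gt1) auto
  then have ev: "eventually (\<lambda>j. Z \<le> \<alpha>^j) sequentially" for Z unfolding filterlim_at_top by auto
  show "filterlim (kseq \<alpha>) at_top sequentially" unfolding filterlim_at_top
  proof
    fix Z :: nat
    show "eventually (\<lambda>j. Z \<le> kseq \<alpha> j) sequentially"
    proof (rule eventually_mono[OF ev[of "2 * real Z"]])
      fix j assume "2 * real Z \<le> \<alpha>^j"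
      then have "real Z \<le> real (kseq \<alpha> j)" using kseq_props(3)[OF a, of j] by linarith
      then show "Z \<le> kseq \<alpha> j" by simp
    qed
  qed
  have r: "(\<lambda>j. real (kseq \<alpha> (Suc j)) / \<alpha>^(Suc j) * \<alpha> / (real (kseq \<alpha> j) / \<alpha>^j)) \<longlonglongrightarrow> 1 * \<alpha> / 1"
    by (intro tendsto_divide tendsto_mult kseq_ratio[OF a, THEN LIMSEQ_Suc] kseq_ratio[OF a] tendsto_const) auto
  have "(\<lambda>j. real (kseq \<alpha> (Suc j)) / \<alpha>^(Suc j) * \<alpha> / (real (kseq \<alpha> j) / \<alpha>^j)) = (\<lambda>j. real (kseq \<alpha> (Suc j)) / real (kseq \<alpha> j))"
  proof
    fix j show "real (kseq \<alpha> (Suc j)) / \<alpha>^(Suc j) * \<alpha> / (real (kseq \<alpha> j) / \<alpha>^j) = real (kseq \<alpha> (Suc j)) / real (kseq \<alpha> j)"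
      using kseq_props(1)[OF a, of j] a by (simp add: field_simps)
  qed
  with r show "(\<lambda>j. real (kseq \<alpha> (Suc j)) / real (kseq \<alpha> j)) \<longlonglongrightarrow> \<alpha>" by simp
qed

context prob_space begin

lemma idd_integral:
  assumes rv: "random_variable borel (X t)" "random_variable borel (X 0)"
    and idd: "distr M borel (X t) = distr M borel (X 0)"
    and f: "f \<in> borel_measurable borel"
  shows "(\<integral>x. f (X t x) \<partial>M) = (\<integral>x. (f (X 0 x) :: real) \<partial>M)"
proof -
  have "(\<integral>x. f (X t x) \<partial>M) = integral\<^sup>L (distr M borel (X t)) f"
    using integral_distr[OF rv(1) f] by simp
  also have "\<dots> = integral\<^sup>L (distr M borel (X 0)) f" by (simp add: idd)
  also have "\<dots> = (\<integral>x. f (X 0 x) \<partial>M)" using integral_distr[OF rv(2) f] by simp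
  finally show ?thesis .
qed

lemma idd_measure:
  assumes rv: "random_variable borel (X t)" "random_variable borel (X 0)"
    and idd: "distr M borel (X t) = distr M borel (X 0)"
    and A: "A \<in> sets borel"
  shows "measure M {x\<in>space M. X t x \<in> A} = measure M {x\<in>space M. X 0 x \<in> A}"
proof -
  have "measure M {x\<in>space M. X t x \<in> A} = measure (distr M borel (X t)) A"
    using measure_distr[OF rv(1) A] by (simp add: vimage_def Int_def conj_commute)
  also have "\<dots> = measure (distr M borel (X 0)) A" by (simp add: idd)
  also have "\<dots> = measure M {x\<in>space M. X 0 x \<in> A}"
    using measure_distr[OF rv(2) A] by (simp add: vimage_def Int_def conj_commute)
  finally show ?thesis .
qed

lemma count_below_le:
  fixes r :: real assumes "r \<ge> 0"
  shows "(\<Sum>k<N. if real k < r then 1 else 0) \<le> r + 1"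
proof -
  have "(\<Sum>k<N. if real k < r then 1 else (0::real)) = real (card {k\<in>{..<N}. real k < r})"
    by (simp add: sum.If_cases Int_def conj_commute)
  also have "card {k\<in>{..<N}. real k < r} \<le> card {..<nat \<lceil>r\<rceil>}"
    by (intro card_mono) (auto, linarith)
  then have "real (card {k\<in>{..<N}. real k < r}) \<le> real (nat \<lceil>r\<rceil>)" by simp
  finally show ?thesis using assms by linarith
qed

lemma pairwise_indep:
  fixes C :: "nat \<Rightarrow> 'a \<Rightarrow> real"
  assumes "indep_vars (\<lambda>_. borel) C UNIV" "k \<noteq> l"
  shows "indep_var borel (C k) borel (C l)"
proof -
  have "indep_vars (\<lambda>_. borel) C (insert k {l})"
    using assms(1) by (rule indep_vars_subset) auto
  from indep_vars_sum[OF _ _ this] assms(2) show ?thesis by simp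
qed

end

context prob_space begin

lemma slln_nonneg:
  fixes X :: "nat \<Rightarrow> 'a \<Rightarrow> real"
  assumes ind: "indep_vars (\<lambda>_. borel) X UNIV"
    and idd: "\<And>t. distr M borel (X t) = distr M borel (X 0)"
    and int: "integrable M (X 0)"
    and nn: "\<And>t x. 0 \<le> X t x"
  shows "AE x in M. (\<lambda>n. (\<Sum>t\<in>{1..n}. X t x) / real n) \<longlonglongrightarrow> expectation (X 0)"
proof -
  define \<mu> where "\<mu> = expectation (X 0)"
  have rv[measurable]: "X t \<in> borel_measurable M" for t
    using conjunct1[OF ind[unfolded indep_vars_def]] by simp
  have fin: "emeasure M A < \<infinity>" for A by (simp add: less_top[symmetric])
  have \<mu>0: "\<mu> \<ge> 0" unfolding \<mu>_def using nn by (simp add: integral_nonneg_AE)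
  define tr where "tr k r = (if r \<le> real k then r else 0)" for k :: nat and r :: real
  have tr_meas[measurable]: "tr k \<in> borel_measurable borel" for k
  proof -
    have "tr k = (\<lambda>r. if r \<le> real k then r else 0)" by (rule ext) (simp add: tr_def)
    also have "\<dots> \<in> borel_measurable borel" by measurable
    finally show ?thesis .
  qed
  have tr_nn: "r \<ge> 0 \<Longrightarrow> tr k r \<ge> 0" for k r unfolding tr_def by auto
  have tr_le: "r \<ge> 0 \<Longrightarrow> tr k r \<le> r" for k r unfolding tr_def by auto
  have tr_lek: "tr k r \<le> real k" for k r unfolding tr_def by auto
  define Y where "Y k x = tr k (X k x)" for k x
  have Y_meas[measurable]: "Y k \<in> borel_measurable M" for k unfolding Y_def by measurable
  have Y_nn: "Y k x \<ge> 0" for k x unfolding Y_def using tr_nn nn by auto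
  have Y_le: "Y k x \<le> real k" for k x unfolding Y_def using tr_lek by auto
  define m where "m k = expectation (Y k)" for k
  have m_eq: "m k = (\<integral>x. tr k (X 0 x) \<partial>M)" for k
    unfolding m_def Y_def by (rule idd_integral[OF rv[of k] rv[of 0] idd[of k] tr_meas])
  define S where "S n x = (\<Sum>t\<in>{1..n}. X t x)" for n x
  define T where "T n x = (\<Sum>t\<in>{1..n}. Y t x)" for n x
  define ET where "ET n = (\<Sum>t\<in>{1..n}. m t)" for n

  have trunc: "AE x in M. (\<lambda>n. (S n x - T n x) / real n) \<longlonglongrightarrow> 0"
  proof -
    define A where "A k = {x\<in>space M. real k < X k x}" for k
    have A_sets[measurable]: "A k \<in> sets M" for k unfolding A_def by measurable
    have pA: "measure M (A k) = measure M {x\<in>space M. real k < X 0 x}" for k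
      using idd_measure[OF rv[of k] rv[of 0] idd[of k], of "{real k<..}"] unfolding A_def by simp
    have B_sets[measurable]: "{x\<in>space M. real k < X 0 x} \<in> sets M" for k by measurable
    have pA_le: "(\<Sum>k<N. measure M (A k)) \<le> \<mu> + 1" for N
    proof -
      have "(\<Sum>k<N. measure M (A k)) = (\<Sum>k<N. \<integral>x. indicator {x\<in>space M. real k < X 0 x} x \<partial>M)"
        using pA by (simp add: Int_absorb2)
      also have "\<dots> = (\<integral>x. (\<Sum>k<N. indicator {x\<in>space M. real k < X 0 x} x) \<partial>M)"
        by (subst Bochner_Integration.integral_sum) (simp_all add: integrable_real_indicator[OF B_sets fin])
      also have "\<dots> \<le> (\<integral>x. X 0 x + 1 \<partial>M)"
      proof (rule integral_mono)
        show "integrable M (\<lambda>x. \<Sum>k<N. indicator {x \<in> space M. real k < X 0 x} x :: real)"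
          by (rule Bochner_Integration.integrable_sum) (rule integrable_real_indicator[OF B_sets fin])
        show "integrable M (\<lambda>x. X 0 x + 1)" using int by simp
        fix x assume x: "x \<in> space M"
        have "(\<Sum>k<N. indicator {x \<in> space M. real k < X 0 x} x :: real) = (\<Sum>k<N. if real k < X 0 x then 1 else 0)"
          using x by (intro sum.cong) auto
        also have "\<dots> \<le> X 0 x + 1" by (rule count_below_le[OF nn])
        finally show "(\<Sum>k<N. indicator {x \<in> space M. real k < X 0 x} x :: real) \<le> X 0 x + 1" .
      qed
      also have "\<dots> = \<mu> + 1" unfolding \<mu>_def using int by (simp add: prob_space)
      finally show ?thesis .
    qed
    have "summable (\<lambda>k. measure M (A k))"
      by (rule summableI_nonneg_bounded[OF measure_nonneg pA_le])
    then have "AE x in M. eventually (\<lambda>k. x \<in> space M - A k) sequentially"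
      by (intro borel_cantelli_AE1 A_sets fin)
    then show ?thesis
    proof (rule AE_mp[OF _ AE_I2], intro impI)
      fix x assume x: "x \<in> space M" and ev: "eventually (\<lambda>k. x \<in> space M - A k) sequentially"
      then obtain N where N: "\<And>k. k \<ge> N \<Longrightarrow> x \<notin> A k" unfolding eventually_sequentially by auto
      have XY: "k \<ge> N \<Longrightarrow> X k x = Y k x" for k
        using N[of k] x unfolding A_def Y_def tr_def by auto
      define c where "c = (\<Sum>t\<in>{1..N}. X t x - Y t x)"
      have "S n x - T n x = c" if n: "n \<ge> N" for n
      proof -
        have sp: "{1..n} = {1..N} \<union> {N<..n}" using n by auto
        have "S n x - T n x = (\<Sum>t\<in>{1..n}. X t x - Y t x)" unfolding S_def T_def by (simp add: sum_subtractf)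
        also have "\<dots> = c + (\<Sum>t\<in>{N<..n}. X t x - Y t x)" unfolding sp c_def
          by (subst sum.union_disjoint) auto
        also have "(\<Sum>t\<in>{N<..n}. X t x - Y t x) = 0" using XY by (intro sum.neutral) auto
        finally show ?thesis by simp
      qed
      then have "eventually (\<lambda>n. c / real n = (S n x - T n x) / real n) sequentially"
        unfolding eventually_sequentially by auto
      then show "(\<lambda>n. (S n x - T n x) / real n) \<longlonglongrightarrow> 0"
        by (rule Lim_transform_eventually[OF lim_const_over_n])
    qed
  qed
  have m_lim: "m \<longlonglongrightarrow> \<mu>"
  proof -
    have "(\<lambda>k. \<integral>x. tr k (X 0 x) \<partial>M) \<longlonglongrightarrow> (\<integral>x. X 0 x \<partial>M)"
    proof (rule integral_dominated_convergence[where w="X 0"])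
      show "X 0 \<in> borel_measurable M" by (rule rv)
      show "(\<lambda>x. tr k (X 0 x)) \<in> borel_measurable M" for k by measurable
      show "integrable M (X 0)" by (rule int)
      show "AE x in M. (\<lambda>k. tr k (X 0 x)) \<longlonglongrightarrow> X 0 x"
      proof (rule AE_I2)
        fix x
        obtain K :: nat where K: "X 0 x \<le> real K" using real_arch_simple by blast
        have "eventually (\<lambda>k. tr k (X 0 x) = X 0 x) sequentially"
          unfolding eventually_sequentially
        proof (intro exI[of _ K] allI impI)
          fix k assume "k \<ge> K" then have "real K \<le> real k" by simp
          then show "tr k (X 0 x) = X 0 x" using K unfolding tr_def by auto
        qed
        then show "(\<lambda>k. tr k (X 0 x)) \<longlonglongrightarrow> X 0 x" by (rule tendsto_eventually)
      qed
      show "AE x in M. norm (tr k (X 0 x)) \<le> X 0 x" for k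
        using tr_le[OF nn] tr_nn[OF nn] by (intro AE_I2) simp
    qed
    moreover have "m = (\<lambda>k. \<integral>x. tr k (X 0 x) \<partial>M)" using m_eq by (rule ext)
    ultimately show ?thesis unfolding \<mu>_def by simp
  qed
  have ET_lim: "(\<lambda>n. ET n / real n) \<longlonglongrightarrow> \<mu>"
    unfolding ET_def by (rule cesaro_lim[OF m_lim])
  define C where "C k x = Y k x - m k" for k x
  have C_meas[measurable]: "C k \<in> borel_measurable M" for k unfolding C_def by measurable
  have C_bd: "norm (C k x) \<le> real k + \<bar>m k\<bar>" for k x
    unfolding C_def using Y_le[of k x] Y_nn[of k x] by simp
  have int_C: "integrable M (C k)" for k
    by (rule integrable_const_bound[OF AE_I2[OF C_bd] C_meas])
  have int_CC: "integrable M (\<lambda>x. C k x * C l x)" for k l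
  proof (rule integrable_const_bound[where B="(real k + \<bar>m k\<bar>) * (real l + \<bar>m l\<bar>)"])
    show "AE x in M. norm (C k x * C l x) \<le> (real k + \<bar>m k\<bar>) * (real l + \<bar>m l\<bar>)"
      using C_bd by (intro AE_I2) (simp add: abs_mult mult_mono')
    show "(\<lambda>x. C k x * C l x) \<in> borel_measurable M" by measurable
  qed
  have int_Y: "integrable M (Y k)" for k
    by (rule integrable_const_bound[where B="real k"]) (use Y_le Y_nn in \<open>auto intro!: AE_I2\<close>)
  have int_Y2: "integrable M (\<lambda>x. (Y k x)^2)" for k
  proof (rule integrable_const_bound[where B="real k ^ 2"])
    show "AE x in M. norm ((Y k x)^2) \<le> real k ^ 2"
      using Y_le Y_nn by (intro AE_I2) (simp add: power_mono)
    show "(\<lambda>x. (Y k x)^2) \<in> borel_measurable M" by measurable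
  qed
  have EC0: "(\<integral>x. C k x \<partial>M) = 0" for k
    unfolding C_def using int_Y[of k] by (simp add: m_def prob_space)
  have indC: "indep_vars (\<lambda>_. borel) C UNIV"
  proof -
    have "indep_vars (\<lambda>_. borel) (\<lambda>k x. (\<lambda>r. tr k r - m k) (X k x)) UNIV"
      by (rule indep_vars_compose2[OF ind]) measurable
    then show ?thesis unfolding C_def Y_def .
  qed
  have cross: "k \<noteq> l \<Longrightarrow> (\<integral>x. C k x * C l x \<partial>M) = 0" for k l
    using indep_var_lebesgue_integral[OF pairwise_indep[OF indC] int_C int_C] EC0 by simp
  have diag: "(\<integral>x. C k x * C k x \<partial>M) \<le> (\<integral>x. (Y k x)^2 \<partial>M)" for k
  proof -
    have "(\<integral>x. C k x * C k x \<partial>M) = (\<integral>x. (Y k x)^2 - 2 * m k * Y k x + (m k)^2 \<partial>M)"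
      unfolding C_def by (rule Bochner_Integration.integral_cong) (simp_all add: power2_eq_square algebra_simps)
    also have "\<dots> = (\<integral>x. (Y k x)^2 \<partial>M) - (m k)^2"
      using int_Y[of k] int_Y2[of k] by (simp add: m_def prob_space power2_eq_square)
    finally show ?thesis by simp
  qed
  have EY2: "(\<integral>x. (Y k x)^2 \<partial>M) = (\<integral>x. (tr k (X 0 x))^2 \<partial>M)" for k
    unfolding Y_def by (rule idd_integral[OF rv[of k] rv[of 0] idd[of k]]) measurable
  have trsq_int: "integrable M (\<lambda>x. (tr n (X 0 x))^2)" for n
  proof (rule integrable_const_bound[where B="real n ^ 2"])
    show "AE x in M. norm ((tr n (X 0 x))^2) \<le> real n ^ 2"
      using tr_lek tr_nn[OF nn] by (intro AE_I2) (simp add: power_mono)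
    show "(\<lambda>x. (tr n (X 0 x))^2) \<in> borel_measurable M" by measurable
  qed
  have trsq_mono: "k \<le> n \<Longrightarrow> (\<integral>x. (tr k (X 0 x))^2 \<partial>M) \<le> (\<integral>x. (tr n (X 0 x))^2 \<partial>M)" for k n
  proof (rule integral_mono[OF trsq_int trsq_int])
    fix x assume "k \<le> n"
    then have "real k \<le> real n" by simp
    then show "(tr k (X 0 x))^2 \<le> (tr n (X 0 x))^2" using nn[of 0 x] unfolding tr_def by auto
  qed
  have TC: "T n x - ET n = (\<Sum>k\<in>{1..n}. C k x)" for n x
    unfolding T_def ET_def C_def by (simp add: sum_subtractf)
  have var: "(\<integral>x. (T n x - ET n)^2 \<partial>M) \<le> real n * (\<integral>x. (tr n (X 0 x))^2 \<partial>M)" for n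
  proof -
    have "(\<integral>x. (T n x - ET n)^2 \<partial>M) = (\<integral>x. (\<Sum>k\<in>{1..n}. \<Sum>l\<in>{1..n}. C k x * C l x) \<partial>M)"
      unfolding TC by (simp add: power2_eq_square sum_product)
    also have "\<dots> = (\<Sum>k\<in>{1..n}. \<Sum>l\<in>{1..n}. \<integral>x. C k x * C l x \<partial>M)"
      using int_CC by (simp add: Bochner_Integration.integral_sum)
    also have "\<dots> = (\<Sum>k\<in>{1..n}. \<integral>x. C k x * C k x \<partial>M)"
    proof (rule sum.cong[OF refl])
      fix k assume k: "k \<in> {1..n}"
      have "(\<Sum>l\<in>{1..n}. \<integral>x. C k x * C l x \<partial>M) = (\<Sum>l\<in>{1..n}. if l = k then \<integral>x. C k x * C k x \<partial>M else 0)"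
        using cross by (intro sum.cong) auto
      also have "\<dots> = (\<integral>x. C k x * C k x \<partial>M)" using k by (simp add: sum.delta)
      finally show "(\<Sum>l\<in>{1..n}. \<integral>x. C k x * C l x \<partial>M) = (\<integral>x. C k x * C k x \<partial>M)" .
    qed
    also have "\<dots> \<le> (\<Sum>k\<in>{1..n}. \<integral>x. (tr n (X 0 x))^2 \<partial>M)"
    proof (rule sum_mono)
      fix k assume "k \<in> {1..n}"
      then show "(\<integral>x. C k x * C k x \<partial>M) \<le> (\<integral>x. (tr n (X 0 x))^2 \<partial>M)"
        using diag[of k] EY2[of k] trsq_mono[of k n] by simp
    qed
    also have "\<dots> = real n * (\<integral>x. (tr n (X 0 x))^2 \<partial>M)" by simp
    finally show ?thesis .
  qed
  have cheb: "\<And>n e. n \<ge> 1 \<Longrightarrow> e > 0 \<Longrightarrow> measure M {x\<in>space M. \<bar>T n x - ET n\<bar> \<ge> e * real n}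
      \<le> (\<integral>x. (tr n (X 0 x))^2 \<partial>M) / (e^2 * real n)"
  proof -
    fix n :: nat and e :: real assume n: "n \<ge> 1" and e: "e > 0"
    have Tm[measurable]: "(\<lambda>x. T n x - ET n) \<in> borel_measurable M" unfolding T_def by measurable
    have "integrable M (\<lambda>x. (T n x - ET n)^2)"
    proof -
      have "(\<lambda>x. (T n x - ET n)^2) = (\<lambda>x. \<Sum>k\<in>{1..n}. \<Sum>l\<in>{1..n}. C k x * C l x)"
        by (simp add: TC power2_eq_square sum_product)
      then show ?thesis using int_CC by simp
    qed
    then have "measure M {x\<in>space M. \<bar>T n x - ET n\<bar> \<ge> e * real n} \<le> (\<integral>x. (T n x - ET n)^2 \<partial>M) / (e * real n)^2"
      using n e by (intro second_moment_method Tm) auto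
    also have "\<dots> \<le> real n * (\<integral>x. (tr n (X 0 x))^2 \<partial>M) / (e * real n)^2"
      by (intro divide_right_mono var) simp
    also have "\<dots> = (\<integral>x. (tr n (X 0 x))^2 \<partial>M) / (e^2 * real n)"
      using n e by (simp add: field_simps power2_eq_square)
    finally show "measure M {x\<in>space M. \<bar>T n x - ET n\<bar> \<ge> e * real n} \<le> (\<integral>x. (tr n (X 0 x))^2 \<partial>M) / (e^2 * real n)" .
  qed
  have ptw: "(\<Sum>j<N. (tr (kseq \<alpha> j) r)^2 / real (kseq \<alpha> j)) \<le> 2 * (r * \<alpha> / (\<alpha> - 1))"
    if a: "\<alpha> > 1" and r: "r \<ge> 0" for \<alpha> r N
  proof -
    have "(\<Sum>j<N. (tr (kseq \<alpha> j) r)^2 / real (kseq \<alpha> j)) \<le> (\<Sum>j<N. 2 * (if r \<le> \<alpha>^j then r^2/\<alpha>^j else 0))"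
    proof (rule sum_mono)
      fix j
      have k1: "real (kseq \<alpha> j) \<ge> 1" using kseq_props(1)[OF a, of j] by simp
      have ka: "real (kseq \<alpha> j) \<le> \<alpha>^j" "\<alpha>^j \<le> 2 * real (kseq \<alpha> j)" using kseq_props[OF a, of j] by auto
      show "(tr (kseq \<alpha> j) r)^2 / real (kseq \<alpha> j) \<le> 2 * (if r \<le> \<alpha>^j then r^2/\<alpha>^j else 0)"
      proof (cases "r \<le> real (kseq \<alpha> j)")
        case True
        then have tr: "tr (kseq \<alpha> j) r = r" unfolding tr_def by simp
        have rj: "r \<le> \<alpha>^j" using True ka by linarith
        have "r^2 / real (kseq \<alpha> j) \<le> r^2 / (\<alpha>^j / 2)"
          using ka k1 a by (intro divide_left_mono) auto
        also have "\<dots> = 2 * (r^2/\<alpha>^j)" by simp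
        finally show ?thesis using tr rj by simp
      next
        case False
        then have "tr (kseq \<alpha> j) r = 0" unfolding tr_def by simp
        then show ?thesis using a by simp
      qed
    qed
    also have "\<dots> = 2 * (\<Sum>j<N. if r \<le> \<alpha>^j then r^2/\<alpha>^j else 0)" by (simp add: sum_distrib_left)
    also have "\<dots> \<le> 2 * (r * \<alpha> / (\<alpha> - 1))" using geom_tail_bound[OF a r, of N] by (intro mult_left_mono) auto
    finally show ?thesis .
  qed
  have sub: "AE x in M. (\<lambda>j. T (kseq \<alpha> j) x / real (kseq \<alpha> j)) \<longlonglongrightarrow> \<mu>" if a: "\<alpha> > 1" for \<alpha>
  proof -
    define k where "k = kseq \<alpha>"
    have k1: "k j \<ge> 1" for j unfolding k_def using kseq_props(1)[OF a] .
    have ETk: "(\<lambda>j. ET (k j) / real (k j)) \<longlonglongrightarrow> \<mu>"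
      unfolding k_def using filterlim_compose[OF ET_lim kseq_lim(1)[OF a]] .
    have ev: "AE x in M. eventually (\<lambda>j. \<bar>T (k j) x - ET (k j)\<bar> < e * real (k j)) sequentially"
      if e: "e > 0" for e
    proof -
      define A where "A j = {x\<in>space M. e * real (k j) \<le> \<bar>T (k j) x - ET (k j)\<bar>}" for j
      have A_sets[measurable]: "A j \<in> sets M" for j unfolding A_def T_def by measurable
      define q where "q j = (\<integral>x. (tr (k j) (X 0 x))^2 \<partial>M) / (e^2 * real (k j))" for j
      have mq: "measure M (A j) \<le> q j" for j unfolding A_def q_def using cheb[OF k1 e] .
      have q0: "q j \<ge> 0" for j unfolding q_def by (intro divide_nonneg_nonneg integral_nonneg_AE) auto
      have qsum: "(\<Sum>j<N. q j) \<le> 2 * (\<mu> * \<alpha> / (\<alpha> - 1)) / e^2" for N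
      proof -
        have "(\<Sum>j<N. q j) = (\<Sum>j<N. \<integral>x. (tr (k j) (X 0 x))^2 / real (k j) \<partial>M) / e^2"
          unfolding q_def by (simp add: sum_divide_distrib mult.commute)
        also have "(\<Sum>j<N. \<integral>x. (tr (k j) (X 0 x))^2 / real (k j) \<partial>M) = (\<integral>x. (\<Sum>j<N. (tr (k j) (X 0 x))^2 / real (k j)) \<partial>M)"
          by (subst Bochner_Integration.integral_sum) (simp_all add: trsq_int)
        also have "\<dots> \<le> (\<integral>x. 2 * (X 0 x * \<alpha> / (\<alpha> - 1)) \<partial>M)"
        proof (rule integral_mono)
          show "integrable M (\<lambda>x. \<Sum>j<N. (tr (k j) (X 0 x))^2 / real (k j))"
            by (rule Bochner_Integration.integrable_sum) (simp add: trsq_int)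
          show "integrable M (\<lambda>x. 2 * (X 0 x * \<alpha> / (\<alpha> - 1)))" using int by simp
          show "(\<Sum>j<N. (tr (k j) (X 0 x))^2 / real (k j)) \<le> 2 * (X 0 x * \<alpha> / (\<alpha> - 1))" for x
            unfolding k_def by (rule ptw[OF a nn])
        qed
        also have "\<dots> = 2 * (\<mu> * \<alpha> / (\<alpha> - 1))" unfolding \<mu>_def by simp
        finally show ?thesis using e by (simp add: divide_right_mono)
      qed
      have "summable q" by (rule summableI_nonneg_bounded[OF q0 qsum])
      then have "summable (\<lambda>j. measure M (A j))"
        by (rule summable_comparison_test') (simp add: mq)
      then have "AE x in M. eventually (\<lambda>j. x \<in> space M - A j) sequentially"
        by (intro borel_cantelli_AE1 A_sets fin)
      then show ?thesis
        by (rule AE_mp[OF _ AE_I2]) (auto simp: A_def elim!: eventually_mono)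
    qed
    have "AE x in M. \<forall>i::nat. eventually (\<lambda>j. \<bar>T (k j) x - ET (k j)\<bar> < 1 / real (Suc i) * real (k j)) sequentially"
      unfolding AE_all_countable by (intro allI ev) simp
    then show ?thesis
    proof (rule AE_mp[OF _ AE_I2], intro impI)
      fix x assume H: "\<forall>i::nat. eventually (\<lambda>j. \<bar>T (k j) x - ET (k j)\<bar> < 1 / real (Suc i) * real (k j)) sequentially"
      have "(\<lambda>j. (T (k j) x - ET (k j)) / real (k j)) \<longlonglongrightarrow> 0"
      proof (rule LIMSEQ_I)
        fix r :: real assume r: "r > 0"
        obtain i :: nat where "inverse (real (Suc i)) < r" using reals_Archimedean[OF r] by blast
        then have i: "1 / real (Suc i) < r" by (simp add: inverse_eq_divide)
        from H[rule_format, of i] obtain N where N: "\<And>j. j \<ge> N \<Longrightarrow> \<bar>T (k j) x - ET (k j)\<bar> < 1 / real (Suc i) * real (k j)"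
          unfolding eventually_sequentially by auto
        show "\<exists>no. \<forall>n\<ge>no. norm ((T (k n) x - ET (k n)) / real (k n) - 0) < r"
        proof (intro exI allI impI)
          fix j assume "j \<ge> N"
          then have "\<bar>T (k j) x - ET (k j)\<bar> / real (k j) < 1 / real (Suc i)"
            using N k1[of j] by (simp add: divide_less_eq)
          then show "norm ((T (k j) x - ET (k j)) / real (k j) - 0) < r" using i by simp
        qed
      qed
      then have "(\<lambda>j. (T (k j) x - ET (k j)) / real (k j) + ET (k j) / real (k j)) \<longlonglongrightarrow> 0 + \<mu>"
        by (intro tendsto_add ETk)
      moreover have "(T (k j) x - ET (k j)) / real (k j) + ET (k j) / real (k j) = T (k j) x / real (k j)" for j
        by (simp add: diff_divide_distrib)
      ultimately show "(\<lambda>j. T (kseq \<alpha> j) x / real (kseq \<alpha> j)) \<longlonglongrightarrow> \<mu>" unfolding k_def by simp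
    qed
  qed
  define al where "al i = 1 + 1 / real (Suc i)" for i
  have al1: "al i > 1" for i unfolding al_def by auto
  have "AE x in M. \<forall>i. (\<lambda>j. T (kseq (al i) j) x / real (kseq (al i) j)) \<longlonglongrightarrow> \<mu>"
    unfolding AE_all_countable using sub al1 by auto
  then have Tlim: "AE x in M. (\<lambda>n. T n x / real n) \<longlonglongrightarrow> \<mu>"
  proof (rule AE_mp[OF _ AE_I2], intro impI)
    fix x assume H: "\<forall>i. (\<lambda>j. T (kseq (al i) j) x / real (kseq (al i) j)) \<longlonglongrightarrow> \<mu>"
    have Tmono: "m' \<le> n \<Longrightarrow> T m' x \<le> T n x" for m' n
      unfolding T_def by (rule sum_mono2) (use Y_nn in auto)
    have T0: "T n x \<ge> 0" for n unfolding T_def by (intro sum_nonneg) (use Y_nn in auto)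
    have ev: "eventually (\<lambda>n. \<mu>/al i - \<delta> < T n x / real n \<and> T n x / real n < al i*\<mu> + \<delta>) sequentially"
      if "\<delta> > 0" for i \<delta>
      by (rule interp_lemma[OF Tmono T0 kseq_props(1)[OF al1] kseq_lim(1)[OF al1] H[rule_format, of i] kseq_lim(2)[OF al1]])
        (use al1[of i] that in auto)
    show "(\<lambda>n. T n x / real n) \<longlonglongrightarrow> \<mu>"
    proof (rule LIMSEQ_I)
      fix e :: real assume e: "e > 0"
      obtain i :: nat where i: "real i > 2 * \<mu> / e" using reals_Archimedean2 by blast
      have "\<mu> / real (Suc i) < e/2"
      proof -
        have "2 * \<mu> < e * real (Suc i)" using i e by (simp add: field_simps)
        then show ?thesis by (simp add: field_simps)
      qed
      then have c1: "al i * \<mu> \<le> \<mu> + e/2" unfolding al_def by (simp add: algebra_simps)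
      have ali: "al i = (real (Suc i) + 1) / real (Suc i)" unfolding al_def by (simp add: field_simps)
      have "\<mu> - \<mu> / al i = \<mu> / (real (Suc i) + 1)" unfolding ali by (simp add: field_simps)
      also have "\<dots> \<le> \<mu> / real (Suc i)" using \<mu>0 by (intro divide_left_mono) auto
      finally have c2: "\<mu> - e/2 \<le> \<mu> / al i" using \<open>\<mu> / real (Suc i) < e/2\<close> by linarith
      from ev[of "e/2" i] e obtain N where N: "\<And>n. n \<ge> N \<Longrightarrow> \<mu>/al i - e/2 < T n x / real n \<and> T n x / real n < al i*\<mu> + e/2"
        unfolding eventually_sequentially by auto
      show "\<exists>no. \<forall>n\<ge>no. norm (T n x / real n - \<mu>) < e"
      proof (intro exI allI impI)
        fix n assume "n \<ge> N"
        from N[OF this] have "\<mu>/al i - e/2 < T n x / real n" "T n x / real n < al i*\<mu> + e/2" by auto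
        then show "norm (T n x / real n - \<mu>) < e" using c1 c2 unfolding real_norm_def abs_less_iff by linarith
      qed
    qed
  qed
  show ?thesis
  proof (rule AE_mp[OF AE_conj_iff[THEN iffD2, OF conjI[OF trunc Tlim]] AE_I2], intro impI)
    fix x assume H: "(\<lambda>n. (S n x - T n x) / real n) \<longlonglongrightarrow> 0 \<and> (\<lambda>n. T n x / real n) \<longlonglongrightarrow> \<mu>"
    then have "(\<lambda>n. (S n x - T n x) / real n + T n x / real n) \<longlonglongrightarrow> 0 + \<mu>"
      by (intro tendsto_add) auto
    moreover have "(S n x - T n x) / real n + T n x / real n = (\<Sum>t\<in>{1..n}. X t x) / real n" for n
      unfolding S_def by (simp add: diff_divide_distrib)
    ultimately show "(\<lambda>n. (\<Sum>t\<in>{1..n}. X t x) / real n) \<longlonglongrightarrow> expectation (X 0)"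
      unfolding \<mu>_def by simp
  qed
qed

lemma idd_compose:
  assumes rv: "random_variable borel (X t)" "random_variable borel (X 0)"
    and idd: "distr M borel (X t) = distr M borel (X 0)"
    and f: "f \<in> borel_measurable borel"
  shows "distr M borel (\<lambda>x. f (X t x)) = distr M borel (\<lambda>x. f (X 0 x))"
proof -
  have "distr M borel (\<lambda>x. f (X t x)) = distr (distr M borel (X t)) borel f"
    using distr_distr[OF f rv(1)] by (simp add: comp_def)
  also have "\<dots> = distr (distr M borel (X 0)) borel f" by (simp add: idd)
  also have "\<dots> = distr M borel (\<lambda>x. f (X 0 x))"
    using distr_distr[OF f rv(2)] by (simp add: comp_def)
  finally show ?thesis .
qed

lemma slln:
  fixes X :: "nat \<Rightarrow> 'a \<Rightarrow> real"
  assumes ind: "indep_vars (\<lambda>_. borel) X UNIV"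
    and idd: "\<And>t. distr M borel (X t) = distr M borel (X 0)"
    and int: "integrable M (X 0)"
  shows "AE x in M. (\<lambda>n. (\<Sum>t\<in>{1..n}. X t x) / real n) \<longlonglongrightarrow> expectation (X 0)"
proof -
  have rv[measurable]: "X t \<in> borel_measurable M" for t
    using conjunct1[OF ind[unfolded indep_vars_def]] by simp
  define P where "P t x = max (X t x) 0" for t x
  define N where "N t x = max (- X t x) 0" for t x
  have fP[measurable]: "(\<lambda>r::real. max r 0) \<in> borel_measurable borel" by measurable
  have fN[measurable]: "(\<lambda>r::real. max (- r) 0) \<in> borel_measurable borel" by measurable
  have indP: "indep_vars (\<lambda>_. borel) P UNIV"
    unfolding P_def by (rule indep_vars_compose2[OF ind, where Y="\<lambda>_ r. max r 0"]) (rule fP)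
  have indN: "indep_vars (\<lambda>_. borel) N UNIV"
    unfolding N_def by (rule indep_vars_compose2[OF ind, where Y="\<lambda>_ r. max (- r) 0"]) (rule fN)
  have iddP: "distr M borel (P t) = distr M borel (P 0)" for t
    unfolding P_def by (rule idd_compose[OF rv[of t] rv[of 0] idd[of t] fP])
  have iddN: "distr M borel (N t) = distr M borel (N 0)" for t
    unfolding N_def by (rule idd_compose[OF rv[of t] rv[of 0] idd[of t] fN])
  have intP: "integrable M (P 0)" unfolding P_def using int by (intro integrable_max) auto
  have intN: "integrable M (N 0)" unfolding N_def using int by (intro integrable_max) auto
  have "AE x in M. (\<lambda>n. (\<Sum>t\<in>{1..n}. P t x) / real n) \<longlonglongrightarrow> expectation (P 0)"
    by (rule slln_nonneg[OF indP iddP intP]) (simp add: P_def)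
  moreover have "AE x in M. (\<lambda>n. (\<Sum>t\<in>{1..n}. N t x) / real n) \<longlonglongrightarrow> expectation (N 0)"
    by (rule slln_nonneg[OF indN iddN intN]) (simp add: N_def)
  ultimately show ?thesis
  proof (eventually_elim)
    case (elim x)
    have "(\<lambda>n. (\<Sum>t\<in>{1..n}. P t x) / real n - (\<Sum>t\<in>{1..n}. N t x) / real n) \<longlonglongrightarrow> expectation (P 0) - expectation (N 0)"
      using elim by (intro tendsto_diff) auto
    moreover have "(\<Sum>t\<in>{1..n}. P t x) / real n - (\<Sum>t\<in>{1..n}. N t x) / real n = (\<Sum>t\<in>{1..n}. X t x) / real n" for n
    proof -
      have "P t x - N t x = X t x" for t unfolding P_def N_def by auto
      then show ?thesis by (simp add: diff_divide_distrib[symmetric] sum_subtractf[symmetric])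
    qed
    moreover have "expectation (P 0) - expectation (N 0) = expectation (X 0)"
    proof -
      have "expectation (P 0) - expectation (N 0) = expectation (\<lambda>x. P 0 x - N 0 x)"
        using intP intN by simp
      also have "(\<lambda>x. P 0 x - N 0 x) = X 0" unfolding P_def N_def by auto
      finally show ?thesis .
    qed
    ultimately show ?case by simp
  qed
qed

end

lemma row_lambda: "row i (\<chi> j. f j) = f i"
  by (simp add: row_def vec_eq_iff)

lemma det_rows_add_multiple:
  fixes A :: "real^'n^'n"
  assumes "finite S" "k \<notin> S"
  shows "det (\<chi> i. if i \<in> S then row i A + c i *s row k A else row i A) = det A"
  using assms
proof (induction S rule: finite_induct)
  case empty
  have "(\<chi> i. row i A) = A" by (vector row_def)
  then show ?case by simp
next
  case (insert j S)
  define A' where "A' = (\<chi> i. if i \<in> S then row i A + c i *s row k A else row i A)"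
  have rk: "row k A' = row k A" using insert.prems unfolding A'_def row_def by (simp add: vec_eq_iff)
  have rj: "row j A' = row j A" using insert.hyps unfolding A'_def row_def by (simp add: vec_eq_iff)
  have ri: "row i A' = (if i \<in> S then row i A + c i *s row k A else row i A)" for i
    unfolding A'_def row_def by (simp add: vec_eq_iff)
  have jk: "j \<noteq> k" using insert.prems by auto
  have "(\<chi> i. if i \<in> insert j S then row i A + c i *s row k A else row i A)
      = (\<chi> i. if i = j then row j A' + c j *s row k A' else row i A')"
    using insert.hyps insert.prems unfolding rk rj ri by (auto simp: vec_eq_iff)
  also have "det \<dots> = det A'" by (rule det_row_operation[OF jk])
  also have "\<dots> = det A" unfolding A'_def using insert by simp
  finally show ?case .
qed

lemma det_rank_one:
  fixes w v :: "real^'n"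
  shows "det (mat 1 + (\<chi> i j. w$i * v$j)) = 1 + v \<bullet> w"
proof (cases "w = 0")
  case True
  have "(\<chi> i j. w$i * v$j) = (0::real^'n^'n)" by (simp add: True vec_eq_iff)
  then show ?thesis by (simp add: True)
next
  case False
  then obtain k where wk: "w$k \<noteq> 0" by (auto simp: vec_eq_iff)
  define B :: "real^'n^'n" where "B = mat 1 + (\<chi> i j. w$i * v$j)"
  define e where "e i = (axis i 1 :: real^'n)" for i
  have e_comp: "e i $ j = (if i = j then 1 else 0)" for i j unfolding e_def axis_def by simp
  have rowB: "row i B = e i + w$i *s v" for i
    unfolding B_def row_def e_def by (simp add: vec_eq_iff mat_def axis_def)
  define S where "S = UNIV - {k}"
  define B1 where "B1 = (\<chi> i. if i \<in> S then row i B + (- (w$i / w$k)) *s row k B else row i B)"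
  have dB1: "det B1 = det B" unfolding B1_def S_def by (rule det_rows_add_multiple) auto
  have rowB1: "row i B1 = (if i = k then e k + w$k *s v else e i - (w$i / w$k) *s e k)" for i
  proof -
    have "row i B1 = (if i \<in> S then row i B + (- (w$i / w$k)) *s row k B else row i B)"
      unfolding B1_def by (simp add: row_lambda)
    then show ?thesis unfolding rowB S_def using wk by (auto simp: vec_eq_iff e_comp field_simps)
  qed
  define x where "x = (\<Sum>i\<in>S. (- (w$k * v$i)) *s row i B1)"
  have xspan: "x \<in> vec.span {row j B1 | j. j \<noteq> k}"
    unfolding x_def S_def by (intro vec.span_sum vec.span_scale vec.span_base) auto
  have B1eq: "(\<chi> i. row i B1) = B1" by (vector row_def)
  have rk: "row k B1 + x = (1 + v \<bullet> w) *s e k"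
  proof (subst vec_eq_iff, intro allI)
    fix j
    have xj: "x $ j = (\<Sum>i\<in>S. - (w$k * v$i) * (e i $ j - (w$i / w$k) * e k $ j))"
      unfolding x_def S_def using wk by (simp add: sum_component rowB1, intro sum.cong) (auto simp: field_simps)
    show "(row k B1 + x) $ j = ((1 + v \<bullet> w) *s e k) $ j"
    proof (cases "j = k")
      case True
      have "x $ j = (\<Sum>i\<in>S. v$i * w$i)" unfolding xj using wk True unfolding S_def
        by (intro sum.cong) (auto simp: e_comp field_simps)
      moreover have "v \<bullet> w = v$k * w$k + (\<Sum>i\<in>S. v$i * w$i)"
        unfolding inner_vec_def S_def by (simp add: sum.remove[of UNIV k])
      ultimately show ?thesis using True rowB1[of k] by (simp add: e_comp algebra_simps)
    next
      case False
      have "x $ j = (\<Sum>i\<in>S. if i = j then - (w$k * v$j) else 0)" unfolding xj S_def using False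
        by (intro sum.cong) (auto simp: e_comp)
      also have "\<dots> = - (w$k * v$j)" using False unfolding S_def by simp
      finally show ?thesis using False rowB1[of k] by (simp add: e_comp)
    qed
  qed
  have "det B1 = det (\<chi> i. if i = k then row k B1 + x else row i B1)"
    using det_row_span[OF xspan] by simp
  also have "(\<chi> i. if i = k then row k B1 + x else row i B1) = (\<chi> i. if i = k then (1 + v \<bullet> w) *s e k else row i B1)"
    unfolding rk ..
  also have "det \<dots> = (1 + v \<bullet> w) * det (\<chi> i. if i = k then e k else row i B1)"
    by (rule det_row_mul)
  also have "det (\<chi> i. if i = k then e k else row i B1) = 1"
  proof -
    define B3 where "B3 = (\<chi> i. if i = k then e k else row i B1)"
    have r3: "row i B3 = (if i = k then e k else e i - (w$i / w$k) *s e k)" for i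
      unfolding B3_def row_lambda using rowB1 by simp
    have "det B3 = det (\<chi> i. if i \<in> S then row i B3 + (w$i / w$k) *s row k B3 else row i B3)"
      unfolding S_def by (rule det_rows_add_multiple[symmetric]) auto
    also have "(\<chi> i. if i \<in> S then row i B3 + (w$i / w$k) *s row k B3 else row i B3) = (mat 1 :: real^'n^'n)"
      unfolding S_def r3 by (auto simp: vec_eq_iff mat_def e_comp)
    finally show ?thesis unfolding B3_def by simp
  qed
  finally show ?thesis using dB1 unfolding B_def by simp
qed

definition psdm :: "real^'n^'n \<Rightarrow> bool" where
  "psdm A \<longleftrightarrow> transpose A = A \<and> (\<forall>x. 0 \<le> x \<bullet> (A *v x))"
definition pdm :: "real^'n^'n \<Rightarrow> bool" where
  "pdm A \<longleftrightarrow> transpose A = A \<and> (\<forall>x. x \<noteq> 0 \<longrightarrow> 0 < x \<bullet> (A *v x))"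

lemma sym_entry: "transpose A = A \<Longrightarrow> A$i$j = A$j$i"
  by (metis transpose_def vec_lambda_beta)

lemma quad_sym:
  fixes D :: "real^'n^'n"
  assumes "transpose D = D"
  shows "x \<bullet> (D *v y) = y \<bullet> (D *v x)"
proof -
  have "x \<bullet> (D *v y) = (\<Sum>i\<in>UNIV. \<Sum>j\<in>UNIV. x$i * D$i$j * y$j)"
    by (simp add: inner_vec_def matrix_vector_mult_def sum_distrib_left mult.assoc)
  also have "\<dots> = (\<Sum>j\<in>UNIV. \<Sum>i\<in>UNIV. x$i * D$i$j * y$j)" by (rule sum.swap)
  also have "\<dots> = y \<bullet> (D *v x)"
    using sym_entry[OF assms] by (simp add: inner_vec_def matrix_vector_mult_def sum_distrib_left mult_ac)
  finally show ?thesis .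
qed

lemma quad_expand:
  fixes D :: "real^'n^'n"
  assumes "transpose D = D"
  shows "(x + s *\<^sub>R y) \<bullet> (D *v (x + s *\<^sub>R y)) = x \<bullet> (D *v x) + 2 * s * (x \<bullet> (D *v y)) + s^2 * (y \<bullet> (D *v y))"
  using quad_sym[OF assms, of y x]
  by (simp add: matrix_vector_right_distrib matrix_vector_mult_scaleR inner_add_left inner_add_right power2_eq_square algebra_simps)

lemma psd_cs:
  fixes D :: "real^'n^'n"
  assumes "psdm D"
  shows "(x \<bullet> (D *v y))^2 \<le> (x \<bullet> (D *v x)) * (y \<bullet> (D *v y))"
proof -
  define a where "a = x \<bullet> (D *v x)"
  define b where "b = x \<bullet> (D *v y)"
  define c where "c = y \<bullet> (D *v y)"
  have sym: "transpose D = D" using assms unfolding psdm_def by auto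
  have q: "0 \<le> a + 2 * s * b + s^2 * c" for s
    using assms quad_expand[OF sym, of x s y] unfolding psdm_def a_def b_def c_def by metis
  have a0: "a \<ge> 0" using q[of 0] by simp
  show ?thesis
  proof (cases "c = 0")
    case True
    have "b = 0"
    proof (rule ccontr)
      assume "b \<noteq> 0"
      have "0 \<le> a + 2 * (- (a + 1) / (2 * b)) * b" using q[of "- (a + 1) / (2 * b)"] True by simp
      also have "\<dots> = -1" using \<open>b \<noteq> 0\<close> by (simp add: field_simps)
      finally show False by simp
    qed
    then show ?thesis using True unfolding a_def b_def c_def by simp
  next
    case False
    have c0: "c > 0" using q[of 0] False quad_expand[OF sym, of 0 1 y] assms unfolding psdm_def c_def
      by (metis less_eq_real_def)
    have "0 \<le> a + 2 * (- b / c) * b + (- b / c)^2 * c" by (rule q)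
    also have "\<dots> = a - b^2 / c" using c0 by (simp add: field_simps power2_eq_square)
    finally have "b^2 \<le> a * c" using c0 by (simp add: field_simps)
    then show ?thesis unfolding a_def b_def c_def .
  qed
qed

lemma psd_zero_row:
  fixes D :: "real^'n^'n"
  assumes "psdm D" "D$i$i = 0"
  shows "D$i$j = 0"
proof -
  have "(axis i 1 \<bullet> (D *v axis j 1))^2 \<le> (axis i 1 \<bullet> (D *v axis i 1)) * (axis j 1 \<bullet> (D *v axis j 1))"
    by (rule psd_cs[OF assms(1)])
  moreover have "axis k 1 \<bullet> (D *v axis l 1) = D$k$l" for k l
    by (simp add: inner_commute[of "axis k 1"] cart_eq_inner_axis[symmetric] matrix_vector_mult_basis column_def)
  ultimately have "(D$i$j)^2 \<le> 0" using assms(2) by simp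
  then show ?thesis by simp
qed

lemma continuous_on_det:
  assumes "\<And>i j. continuous_on S (\<lambda>t. F t $ i $ j)"
  shows "continuous_on S (\<lambda>t. det (F t :: real^'n^'n))"
  unfolding det_def by (intro continuous_intros assms)

lemma tendsto_det:
  assumes "\<And>i j. ((\<lambda>t. F t $ i $ j) \<longlongrightarrow> G $ i $ j) L"
  shows "((\<lambda>t. det (F t :: real^'n^'n)) \<longlongrightarrow> det G) L"
  unfolding det_def by (intro tendsto_intros assms)

lemma pdm_invertible:
  fixes A :: "real^'n^'n"
  assumes "pdm A"
  shows "invertible A"
proof -
  have "\<forall>x. A *v x = 0 \<longrightarrow> x = 0"
  proof (intro allI impI)
    fix x assume "A *v x = 0"
    then show "x = 0" using assms unfolding pdm_def by (metis inner_zero_right less_irrefl)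
  qed
  then show ?thesis unfolding invertible_left_inverse matrix_left_invertible_ker .
qed

lemma pdm_det_pos:
  fixes A :: "real^'n^'n"
  assumes A: "pdm A"
  shows "det A > 0"
proof (rule ccontr)
  assume "\<not> det A > 0"
  then have le: "det A \<le> 0" by simp
  define P where "P t = (1 - t) *\<^sub>R (mat 1 :: real^'n^'n) + t *\<^sub>R A" for t :: real
  have cont: "continuous_on {0..1} (\<lambda>t. det (P t))"
    by (rule continuous_on_det) (simp add: P_def, intro continuous_intros)
  have "\<exists>t. 0 \<le> t \<and> t \<le> 1 \<and> det (P t) = 0"
    by (rule IVT2'[OF _ _ _ cont]) (use le in \<open>simp_all add: P_def\<close>)
  then obtain t where t: "0 \<le> t" "t \<le> 1" "det (P t) = 0" by blast
  have "pdm (P t)"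
    unfolding pdm_def
  proof (intro conjI allI impI)
    show "transpose (P t) = P t" using A unfolding pdm_def P_def
      by (simp add: transpose_def vec_eq_iff mat_def)
    fix x :: "real^'n" assume x: "x \<noteq> 0"
    have eq: "x \<bullet> (P t *v x) = (1 - t) * (x \<bullet> x) + t * (x \<bullet> (A *v x))"
      unfolding P_def by (simp add: matrix_vector_mult_add_rdistrib scaleR_matrix_vector_assoc[symmetric] inner_add_right)
    have "x \<bullet> x > 0" using x by simp
    moreover have "x \<bullet> (A *v x) > 0" using A x unfolding pdm_def by auto
    ultimately have "(1 - t) * (x \<bullet> x) + t * (x \<bullet> (A *v x)) > 0"
      using t by (cases "t = 0") (auto intro!: add_nonneg_pos mult_nonneg_nonneg)
    then show "0 < x \<bullet> (P t *v x)" unfolding eq .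
  qed
  then have "det (P t) \<noteq> 0" using pdm_invertible invertible_det_nz by blast
  with t show False by simp
qed

lemma outer_mult: "outer a b *v x = (b \<bullet> x) *\<^sub>R (a :: real^'n)"
  by (simp add: outer_def vec_eq_iff matrix_vector_mult_def inner_vec_def sum_distrib_left mult_ac)

lemma rank_one_step:
  fixes A :: "real^'n^'n"
  assumes A: "pdm A"
  shows "pdm (A + outer u u)" "det A \<le> det (A + outer u u)" "det (A + outer u u) = det A \<Longrightarrow> u = 0"
proof -
  have symA: "transpose A = A" using A unfolding pdm_def by auto
  show pd: "pdm (A + outer u u)"
    unfolding pdm_def
  proof (intro conjI allI impI)
    show "transpose (A + outer u u) = A + outer u u"
      using symA by (simp add: transpose_def outer_def vec_eq_iff mult.commute)
    fix x :: "real^'n" assume x: "x \<noteq> 0"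
    have "x \<bullet> ((A + outer u u) *v x) = x \<bullet> (A *v x) + (u \<bullet> x)^2"
      by (simp add: matrix_vector_mult_add_rdistrib outer_mult inner_add_right inner_commute power2_eq_square)
    moreover have "x \<bullet> (A *v x) > 0" using A x unfolding pdm_def by auto
    ultimately show "0 < x \<bullet> ((A + outer u u) *v x)" by (simp add: add_pos_nonneg)
  qed
  obtain B where B: "A ** B = mat 1" using pdm_invertible[OF A] unfolding invertible_right_inverse by blast
  define w where "w = B *v u"
  have Aw: "A *v w = u" unfolding w_def matrix_vector_mul_assoc B by simp
  have fac: "A + outer u u = A ** (mat 1 + (\<chi> i j. w$i * u$j))"
  proof -
    have "A ** (\<chi> i j. w$i * u$j) = outer u u"
      unfolding outer_def Aw[symmetric]
      by (simp add: vec_eq_iff matrix_matrix_mult_def matrix_vector_mult_def sum_distrib_right mult_ac)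
    then show ?thesis by (simp add: matrix_add_ldistrib)
  qed
  have d: "det (A + outer u u) = det A * (1 + u \<bullet> w)"
    unfolding fac det_mul det_rank_one ..
  have uw: "u \<bullet> w = w \<bullet> (A *v w)" unfolding Aw by (simp add: inner_commute)
  have uw0: "u \<bullet> w \<ge> 0" unfolding uw using A unfolding pdm_def by (cases "w = 0") (auto intro: less_imp_le)
  have dA: "det A > 0" by (rule pdm_det_pos[OF A])
  show "det A \<le> det (A + outer u u)" unfolding d using dA uw0 by (simp add: algebra_simps)
  assume "det (A + outer u u) = det A"
  then have "u \<bullet> w = 0" unfolding d using dA by (simp add: algebra_simps)
  then have "w = 0" unfolding uw using A unfolding pdm_def by (metis less_irrefl)
  then show "u = 0" using Aw by simp
qed

lemma diag_nonneg: "psdm D \<Longrightarrow> D$i$i \<ge> 0"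
proof -
  assume "psdm D"
  then have "0 \<le> axis i 1 \<bullet> (D *v axis i 1)" unfolding psdm_def by auto
  moreover have "axis k 1 \<bullet> (D *v axis l 1) = D$k$l" for k l
    by (simp add: inner_commute[of "axis k 1"] cart_eq_inner_axis[symmetric] matrix_vector_mult_basis column_def)
  ultimately show ?thesis by simp
qed

lemma peel:
  fixes D :: "real^'n^'n"
  assumes D: "psdm D" and di: "D$i$i \<noteq> 0"
  obtains u where "psdm (D - outer u u)" "(D - outer u u)$i$i = 0"
    "\<And>j. D$j$j = 0 \<Longrightarrow> (D - outer u u)$j$j = 0"
proof -
  have symD: "transpose D = D" using D unfolding psdm_def by auto
  define d where "d = D$i$i"
  have dpos: "d > 0" using diag_nonneg[OF D, of i] di unfolding d_def by simp
  define u where "u = (1 / sqrt d) *\<^sub>R (D *v axis i 1)"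
  have uj: "u$j = D$j$i / sqrt d" for j
    unfolding u_def by (simp add: matrix_vector_mult_basis column_def)
  have oij: "(outer u u)$j$l = D$j$i * D$l$i / d" for j l
    unfolding outer_def using dpos by (simp add: uj real_sqrt_mult[symmetric])
  show ?thesis
  proof
    show "(D - outer u u)$i$i = 0" using dpos by (simp add: oij d_def power2_eq_square)
    show "(D - outer u u)$j$j = 0" if "D$j$j = 0" for j
      using psd_zero_row[OF D that, of i] that by (simp add: oij)
    show "psdm (D - outer u u)"
      unfolding psdm_def
    proof (intro conjI allI)
      show "transpose (D - outer u u) = D - outer u u"
        using symD by (simp add: transpose_def vec_eq_iff oij mult.commute)
      fix x :: "real^'n"
      have cs: "(x \<bullet> (D *v axis i 1))^2 \<le> (x \<bullet> (D *v x)) * (axis i 1 \<bullet> (D *v axis i 1))"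
        by (rule psd_cs[OF D])
      have dd: "axis i 1 \<bullet> (D *v axis i 1) = d"
        unfolding d_def by (simp add: inner_commute[of "axis i 1"] cart_eq_inner_axis[symmetric] matrix_vector_mult_basis column_def)
      have ux: "u \<bullet> x = (x \<bullet> (D *v axis i 1)) / sqrt d" unfolding u_def by (simp add: inner_commute)
      have "(u \<bullet> x)^2 = (x \<bullet> (D *v axis i 1))^2 / d" unfolding ux using dpos by (simp add: power_divide)
      also have "\<dots> \<le> x \<bullet> (D *v x)" using cs dpos unfolding dd by (simp add: divide_le_eq)
      finally have le: "(u \<bullet> x)^2 \<le> x \<bullet> (D *v x)" .
      have "x \<bullet> ((D - outer u u) *v x) = x \<bullet> (D *v x) - (u \<bullet> x)^2"
        by (simp add: matrix_vector_mult_diff_rdistrib outer_mult inner_diff_right inner_commute power2_eq_square)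
      then show "0 \<le> x \<bullet> ((D - outer u u) *v x)" using le by simp
    qed
  qed
qed

lemma det_psd_mono_aux:
  fixes D :: "real^'n^'n"
  shows "card {i. D$i$i \<noteq> 0} = n \<Longrightarrow> psdm D \<Longrightarrow> pdm A \<Longrightarrow>
    det A \<le> det (A + D) \<and> (det (A + D) = det A \<longrightarrow> D = 0)"
proof (induction n arbitrary: D A rule: less_induct)
  case (less n)
  show ?case
  proof (cases "{i. D$i$i \<noteq> 0} = {}")
    case True
    then have "D = 0" using psd_zero_row[OF less.prems(2)] by (auto simp: vec_eq_iff)
    then show ?thesis by simp
  next
    case False
    then obtain i where di: "D$i$i \<noteq> 0" by auto
    obtain u where u: "psdm (D - outer u u)" "(D - outer u u)$i$i = 0"
      "\<And>j. D$j$j = 0 \<Longrightarrow> (D - outer u u)$j$j = 0"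
      using peel[OF less.prems(2) di] by blast
    define D' where "D' = D - outer u u"
    define A' where "A' = A + outer u u"
    have sub: "{j. D'$j$j \<noteq> 0} \<subseteq> {j. D$j$j \<noteq> 0} - {i}" using u unfolding D'_def by auto
    have "card {j. D'$j$j \<noteq> 0} < n"
    proof -
      have "card {j. D'$j$j \<noteq> 0} \<le> card ({j. D$j$j \<noteq> 0} - {i})" by (rule card_mono[OF _ sub]) simp
      also have "\<dots> < card {j. D$j$j \<noteq> 0}" using di by (intro card_Diff1_less) auto
      finally show ?thesis using less.prems(1) by simp
    qed
    from less.IH[OF this refl, of A'] u(1) rank_one_step(1)[OF less.prems(3), of u]
    have IH: "det A' \<le> det (A' + D')" "det (A' + D') = det A' \<Longrightarrow> D' = 0"
      unfolding D'_def A'_def by auto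
    have AD: "A + D = A' + D'" unfolding A'_def D'_def by simp
    have s1: "det A \<le> det A'" "det A' = det A \<Longrightarrow> u = 0"
      unfolding A'_def using rank_one_step[OF less.prems(3), of u] by auto
    show ?thesis
    proof
      show "det A \<le> det (A + D)" unfolding AD using IH(1) s1(1) by linarith
      show "det (A + D) = det A \<longrightarrow> D = 0"
      proof
        assume "det (A + D) = det A"
        then have e1: "det (A' + D') = det A'" "det A' = det A" unfolding AD using IH(1) s1(1) by linarith+
        have "D' = 0" by (rule IH(2)[OF e1(1)])
        moreover have "u = 0" by (rule s1(2)[OF e1(2)])
        ultimately show "D = 0" unfolding D'_def by (simp add: outer_def vec_eq_iff)
      qed
    qed
  qed
qed

lemma det_psd_mono:
  fixes D A :: "real^'n^'n"
  assumes "psdm D" "pdm A"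
  shows "det A \<le> det (A + D)" "det (A + D) = det A \<Longrightarrow> D = 0"
  using det_psd_mono_aux[OF refl assms] by auto

lemma psd_invertible_pd:
  fixes A :: "real^'n^'n"
  assumes "psdm A" "invertible A"
  shows "pdm A"
  unfolding pdm_def
proof (intro conjI allI impI)
  show "transpose A = A" using assms unfolding psdm_def by auto
  fix x :: "real^'n" assume x: "x \<noteq> 0"
  show "0 < x \<bullet> (A *v x)"
  proof (rule ccontr)
    assume "\<not> ?thesis"
    then have x0: "x \<bullet> (A *v x) = 0" using assms(1) unfolding psdm_def by (metis less_eq_real_def)
    have "(A *v x) $ k = 0" for k
    proof -
      have "(axis k 1 \<bullet> (A *v x))^2 \<le> (axis k 1 \<bullet> (A *v axis k 1)) * (x \<bullet> (A *v x))"
        by (rule psd_cs[OF assms(1)])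
      then have "(axis k 1 \<bullet> (A *v x))^2 \<le> 0" using x0 by simp
      then have "axis k 1 \<bullet> (A *v x) = 0" by simp
      then show ?thesis by (simp add: inner_commute[of "axis k 1"] cart_eq_inner_axis[symmetric])
    qed
    then have "A *v x = 0" by (simp add: vec_eq_iff)
    then have "x = 0" using assms(2) unfolding invertible_left_inverse matrix_left_invertible_ker by blast
    with x show False by simp
  qed
qed

lemma sigmoidal_bounded:
  assumes "sigmoidal \<sigma>"
  obtains K where "\<And>x. \<bar>\<sigma> x\<bar> \<le> K"
proof -
  from assms obtain a b where mono: "mono \<sigma>" and lim: "(\<sigma> \<longlongrightarrow> a) at_bot" "(\<sigma> \<longlongrightarrow> b) at_top"
    unfolding sigmoidal_def by auto
  have up: "\<sigma> x \<le> b" for x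
  proof (rule ccontr)
    assume "\<not> \<sigma> x \<le> b"
    then have "eventually (\<lambda>y. \<sigma> y < \<sigma> x) at_top" using order_tendstoD(2)[OF lim(2)] by simp
    then obtain N where N: "\<And>y. y \<ge> N \<Longrightarrow> \<sigma> y < \<sigma> x" unfolding eventually_at_top_linorder by auto
    have "\<sigma> x \<le> \<sigma> (max x N)" using mono by (simp add: mono_def)
    with N[of "max x N"] show False by simp
  qed
  have lo: "a \<le> \<sigma> x" for x
  proof (rule ccontr)
    assume "\<not> a \<le> \<sigma> x"
    then have "eventually (\<lambda>y. \<sigma> x < \<sigma> y) at_bot" using order_tendstoD(1)[OF lim(1)] by simp
    then obtain N where N: "\<And>y. y \<le> N \<Longrightarrow> \<sigma> x < \<sigma> y" unfolding eventually_at_bot_linorder by auto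
    have "\<sigma> (min x N) \<le> \<sigma> x" using mono by (simp add: mono_def)
    with N[of "min x N"] show False by simp
  qed
  show ?thesis by (rule that[of "\<bar>a\<bar> + \<bar>b\<bar>"]) (use up lo in \<open>smt (verit)\<close>)
qed

lemma mlp_continuous:
  assumes "sigmoidal \<sigma>"
  shows "continuous_on UNIV (mlp \<sigma> V)"
proof -
  obtain A c B b where V: "V = (A, c, B, b)" by (cases V) auto
  have s: "continuous_on UNIV \<sigma>" using assms unfolding sigmoidal_def by auto
  have "continuous_on UNIV (\<lambda>z. (\<chi> h. \<sigma> ((A $ h) \<bullet> z + c $ h)))"
    by (intro continuous_on_vec_lambda continuous_on_compose2[OF s _ subset_UNIV] continuous_intros)
  moreover have L: "continuous_on UNIV ((*v) B)"
    by (rule linear_continuous_on[OF matrix_vector_mul_bounded_linear])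
  ultimately have "continuous_on UNIV (\<lambda>z. B *v (\<chi> h. \<sigma> ((A $ h) \<bullet> z + c $ h)) + b)"
    by (intro continuous_on_add continuous_on_const continuous_on_compose2[OF L]) auto
  then show ?thesis unfolding V mlp_def by simp
qed

lemma mlp_bounded:
  assumes "sigmoidal \<sigma>"
  obtains C where "\<And>z i. \<bar>mlp \<sigma> V z $ i\<bar> \<le> C"
proof -
  obtain K where K: "\<And>x. \<bar>\<sigma> x\<bar> \<le> K" using sigmoidal_bounded[OF assms] by blast
  obtain A c B b where V: "V = (A, c, B, b)" by (cases V) auto
  define C where "C = (\<Sum>i\<in>UNIV. (\<Sum>j\<in>UNIV. \<bar>B$i$j\<bar> * K) + \<bar>b$i\<bar>)"
  have "\<bar>mlp \<sigma> V z $ i\<bar> \<le> C" for z i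
  proof -
    have "\<bar>mlp \<sigma> V z $ i\<bar> = \<bar>(\<Sum>j\<in>UNIV. B$i$j * \<sigma> ((A $ j) \<bullet> z + c $ j)) + b$i\<bar>"
      unfolding V mlp_def by (simp add: matrix_vector_mult_def)
    also have "\<dots> \<le> (\<Sum>j\<in>UNIV. \<bar>B$i$j * \<sigma> ((A $ j) \<bullet> z + c $ j)\<bar>) + \<bar>b$i\<bar>"
      by (rule order_trans[OF abs_triangle_ineq]) (simp add: sum_abs)
    also have "\<dots> \<le> (\<Sum>j\<in>UNIV. \<bar>B$i$j\<bar> * K) + \<bar>b$i\<bar>"
      using K by (intro add_right_mono sum_mono) (simp add: abs_mult mult_left_mono)
    also have "\<dots> \<le> C" unfolding C_def
      by (rule member_le_sum[where f="\<lambda>i. (\<Sum>j\<in>UNIV. \<bar>B$i$j\<bar> * K) + \<bar>b$i\<bar>"])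
         (use K[of 0] in \<open>auto intro!: add_nonneg_nonneg sum_nonneg\<close>)
    finally show ?thesis .
  qed
  then show ?thesis by (rule that)
qed

lemma gram_psdm:
  fixes f :: "'a \<Rightarrow> real^'n"
  assumes int: "\<And>i j. integrable M (\<lambda>x. f x $ i * f x $ j)"
  shows "psdm (\<chi> i j. \<integral>x. f x $ i * f x $ j \<partial>M)"
  unfolding psdm_def
proof (intro conjI allI)
  show "transpose (\<chi> i j. \<integral>x. f x $ i * f x $ j \<partial>M) = (\<chi> i j. \<integral>x. f x $ i * f x $ j \<partial>M)"
    by (simp add: transpose_def vec_eq_iff mult.commute)
  fix y :: "real^'n"
  have "y \<bullet> ((\<chi> i j. \<integral>x. f x $ i * f x $ j \<partial>M) *v y) = (\<Sum>i\<in>UNIV. \<Sum>j\<in>UNIV. \<integral>x. y$i * y$j * (f x $ i * f x $ j) \<partial>M)"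
    by (simp add: inner_vec_def matrix_vector_mult_def sum_distrib_left mult_ac)
  also have "\<dots> = (\<integral>x. (\<Sum>i\<in>UNIV. \<Sum>j\<in>UNIV. y$i * y$j * (f x $ i * f x $ j)) \<partial>M)"
    using int by (simp add: Bochner_Integration.integral_sum)
  also have "\<dots> = (\<integral>x. (y \<bullet> f x)^2 \<partial>M)"
    by (simp add: inner_vec_def power2_eq_square sum_product mult_ac)
  also have "\<dots> \<ge> 0" by (rule integral_nonneg_AE) simp
  finally show "0 \<le> y \<bullet> ((\<chi> i j. \<integral>x. f x $ i * f x $ j \<partial>M) *v y)" .
qed

lemma emp_cov_entry:
  "emp_cov f Y Z n x $ i $ j = (\<Sum>t\<in>{1..n}. (Y t x - f (Z t x)) $ i * (Y t x - f (Z t x)) $ j) / real n"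
  by (simp add: emp_cov_def outer_def sum_component divide_inverse mult.commute)

lemma borel_measurable_vec_nth':
  fixes f :: "'a \<Rightarrow> real^'n"
  assumes "f \<in> borel_measurable M"
  shows "(\<lambda>x. f x $ i) \<in> borel_measurable M"
proof -
  have "(\<lambda>v::real^'n. v $ i) \<in> borel_measurable borel"
    by (intro borel_measurable_continuous_onI continuous_on_component continuous_on_id)
  from measurable_compose[OF assms this] show ?thesis by (simp add: comp_def)
qed
lemma cont_h:
  fixes f :: "real^'p \<Rightarrow> real^'d"
  assumes fc: "continuous_on UNIV f"
  shows "continuous_on UNIV (\<lambda>p::(real^'p) \<times> (real^'d). (f (fst p) + snd p) $ i * (f (fst p) + snd p) $ j)"
proof -
  have c0: "continuous_on UNIV (\<lambda>p::(real^'p) \<times> (real^'d). fst p)" by (rule continuous_on_fst[OF continuous_on_id])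
  have c1: "continuous_on UNIV (\<lambda>p::(real^'p) \<times> (real^'d). f (fst p))"
    by (rule continuous_on_compose2[OF fc c0]) simp
  have c2: "continuous_on UNIV (\<lambda>p::(real^'p) \<times> (real^'d). f (fst p) + snd p)"
    by (rule continuous_on_add[OF c1 continuous_on_snd[OF continuous_on_id]])
  show ?thesis by (rule continuous_on_mult[OF continuous_on_component[OF c2] continuous_on_component[OF c2]])
qed

lemma (in prob_space) indep_from_product:
  fixes X :: "'a \<Rightarrow> 'b::second_countable_topology" and E :: "'a \<Rightarrow> 'c::second_countable_topology"
    and g :: "'b \<Rightarrow> real" and k :: "'c \<Rightarrow> real"
  assumes Xm: "X \<in> borel_measurable M" and Em: "E \<in> borel_measurable M"
    and prod: "distr M borel (\<lambda>x. (X x, E x)) = distr M borel X \<Otimes>\<^sub>M distr M borel E"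
    and gm: "g \<in> borel_measurable borel" and km: "k \<in> borel_measurable borel"
  shows "indep_var borel (\<lambda>x. g (X x)) borel (\<lambda>x. k (E x))"
proof -
  have r1: "random_variable borel (\<lambda>x. g (X x))" using measurable_compose[OF Xm gm] by (simp add: comp_def)
  have r2: "random_variable borel (\<lambda>x. k (E x))" using measurable_compose[OF Em km] by (simp add: comp_def)
  have d1: "distr M borel (\<lambda>x. g (X x)) = distr (distr M borel X) borel g"
    using distr_distr[OF gm Xm] by (simp add: comp_def)
  have d2: "distr M borel (\<lambda>x. k (E x)) = distr (distr M borel E) borel k"
    using distr_distr[OF km Em] by (simp add: comp_def)
  have sf: "sigma_finite_measure (distr (distr M borel E) borel k)"
  proof -
    have "prob_space (distr (distr M borel E) borel k)"
      by (rule prob_space.prob_space_distr[OF prob_space_distr[OF Em]]) (simp add: km)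
    then show ?thesis by (rule prob_space_imp_sigma_finite)
  qed
  have pm: "(\<lambda>x. (X x, E x)) \<in> borel_measurable M"
    unfolding borel_prod[symmetric] by (rule measurable_Pair[OF Xm Em])
  note [measurable] = gm km
  have mm: "(\<lambda>(x, y). (g x, k y)) \<in> measurable (borel :: ('b \<times> 'c) measure) (borel \<Otimes>\<^sub>M borel)"
    unfolding borel_prod[symmetric] by measurable
  have "distr M borel (\<lambda>x. g (X x)) \<Otimes>\<^sub>M distr M borel (\<lambda>x. k (E x))
      = distr (distr M borel X \<Otimes>\<^sub>M distr M borel E) (borel \<Otimes>\<^sub>M borel) (\<lambda>(x, y). (g x, k y))"
  proof -
    have gm': "g \<in> measurable (distr M borel X) borel" by (simp add: gm)
    have km': "k \<in> measurable (distr M borel E) borel" by (simp add: km)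
    show ?thesis unfolding d1 d2 by (rule pair_measure_distr[OF gm' km' sf])
  qed
  also have "\<dots> = distr (distr M borel (\<lambda>x. (X x, E x))) (borel \<Otimes>\<^sub>M borel) (\<lambda>(x, y). (g x, k y))"
    unfolding prod ..
  also have "\<dots> = distr M (borel \<Otimes>\<^sub>M borel) (\<lambda>x. (g (X x), k (E x)))"
    using distr_distr[OF mm pm] by (simp add: comp_def)
  finally show ?thesis unfolding indep_var_distribution_eq using r1 r2 by simp
qed

theorem mainTheorem1:
  fixes M :: "'a measure" and \<sigma> :: "real \<Rightarrow> real"
    and Z :: "nat \<Rightarrow> 'a \<Rightarrow> real^'p" and eps :: "nat \<Rightarrow> 'a \<Rightarrow> real^'d"
    and Y :: "nat \<Rightarrow> 'a \<Rightarrow> real^'d"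
    and \<Theta> :: "((real^'p^'h) \<times> (real^'h) \<times> (real^'h^'d) \<times> (real^'d)) set"
    and W0 W :: "(real^'p^'h) \<times> (real^'h) \<times> (real^'h^'d) \<times> (real^'d)"
    and G :: "(((real^'p^'h) \<times> (real^'h) \<times> (real^'h^'d) \<times> (real^'d)) \<Rightarrow>
               ((real^'p^'h) \<times> (real^'h) \<times> (real^'h^'d) \<times> (real^'d))) set"
  assumes "prob_space M"
    and "sigmoidal \<sigma>"
    and "prob_space.indep_vars M (\<lambda>_. borel) (\<lambda>t x. (Z t x, eps t x)) UNIV"
    and "\<forall>t. distr M borel (\<lambda>x. (Z t x, eps t x)) = distr M borel (\<lambda>x. (Z 0 x, eps 0 x))"
    and "distr M borel (\<lambda>x. (Z 0 x, eps 0 x)) = distr M borel (Z 0) \<Otimes>\<^sub>M distr M borel (eps 0)"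
    and "\<forall>i. prob_space.expectation M (\<lambda>x. eps 0 x $ i) = 0"
    and "integrable M (\<lambda>x. (norm (eps 0 x))\<^sup>2)"
    and "invertible (\<chi> i j. prob_space.expectation M (\<lambda>x. eps 0 x $ i * eps 0 x $ j))"
    and "\<forall>t. \<forall>x\<in>space M. Y t x = mlp \<sigma> W0 (Z t x) + eps t x"
    and "compact \<Theta>" and "W0 \<in> \<Theta>"
    and "finite G" and "id \<in> G" and "\<forall>g\<in>G. \<forall>h\<in>G. g \<circ> h \<in> G" and "\<forall>g\<in>G. bij g"
    and "\<forall>g\<in>G. \<forall>V z. mlp \<sigma> (g V) z = mlp \<sigma> V z"
    and "\<forall>V\<in>\<Theta>. (AE x in M. mlp \<sigma> V (Z 0 x) = mlp \<sigma> W0 (Z 0 x)) \<longrightarrow> (\<exists>g\<in>G. V = g W0)"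
    and "W \<in> \<Theta>"
  shows "(AE x in M. (\<lambda>n. U_n (mlp \<sigma> W) Y Z n x - U_n (mlp \<sigma> W0) Y Z n x)
            \<longlonglongrightarrow> K_contrast M (mlp \<sigma> W) (mlp \<sigma> W0) (Y 0) (Z 0))
         \<and> K_contrast M (mlp \<sigma> W) (mlp \<sigma> W0) (Y 0) (Z 0) \<ge> 0
         \<and> (K_contrast M (mlp \<sigma> W) (mlp \<sigma> W0) (Y 0) (Z 0) = 0 \<longleftrightarrow> (\<exists>g\<in>G. W = g W0))"
proof -
  note a = assms
  interpret prob_space M by (rule a(1))
  define P where "P t x = (Z t x, eps t x)" for t x
  have rvP[measurable]: "P t \<in> borel_measurable M" for t
    using conjunct1[OF a(3)[unfolded indep_vars_def]] unfolding P_def by simp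
  have fst_m[measurable]: "(fst :: (real^'p) \<times> (real^'d) \<Rightarrow> real^'p) \<in> borel_measurable borel"
    by (intro borel_measurable_continuous_onI continuous_intros)
  have snd_m[measurable]: "(snd :: (real^'p) \<times> (real^'d) \<Rightarrow> real^'d) \<in> borel_measurable borel"
    by (intro borel_measurable_continuous_onI continuous_intros)
  have Z0m[measurable]: "Z 0 \<in> borel_measurable M"
    using measurable_compose[OF rvP[of 0] fst_m] unfolding P_def by (simp add: comp_def)
  have E0m[measurable]: "eps 0 \<in> borel_measurable M"
    using measurable_compose[OF rvP[of 0] snd_m] unfolding P_def by (simp add: comp_def)
  define F :: "(real^'p^'h) \<times> (real^'h) \<times> (real^'h^'d) \<times> (real^'d) \<Rightarrow> real^'p \<Rightarrow> real^'d"
    where "F V = mlp \<sigma> V" for V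
  have Fm[measurable]: "F V \<in> borel_measurable borel" for V
    unfolding F_def by (rule borel_measurable_continuous_onI[OF mlp_continuous[OF a(2)]])
  have Fc: "continuous_on UNIV (F V)" for V unfolding F_def by (rule mlp_continuous[OF a(2)])
  have Fb: "\<exists>C. \<forall>z i. \<bar>F V z $ i\<bar> \<le> C" for V
    using mlp_bounded[OF a(2), of V] unfolding F_def by metis
  have int_e2: "integrable M (\<lambda>x. (norm (eps 0 x))^2)" by (rule a(7))
  have em: "(\<lambda>x. eps 0 x $ i) \<in> borel_measurable M" for i by (rule borel_measurable_vec_nth'[OF E0m])
  have int_ee: "integrable M (\<lambda>x. eps 0 x $ i * eps 0 x $ j)" for i j
  proof (rule Bochner_Integration.integrable_bound[OF int_e2])
    show "(\<lambda>x. eps 0 x $ i * eps 0 x $ j) \<in> borel_measurable M" by (intro borel_measurable_times em)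
    show "AE x in M. norm (eps 0 x $ i * eps 0 x $ j) \<le> norm ((norm (eps 0 x))^2)"
    proof (rule AE_I2)
      fix x
      have "\<bar>eps 0 x $ i\<bar> * \<bar>eps 0 x $ j\<bar> \<le> norm (eps 0 x) * norm (eps 0 x)"
        by (intro mult_mono component_le_norm_cart) auto
      then show "norm (eps 0 x $ i * eps 0 x $ j) \<le> norm ((norm (eps 0 x))^2)"
        by (simp add: abs_mult power2_eq_square)
    qed
  qed
  have int_e: "integrable M (\<lambda>x. eps 0 x $ i)" for i
  proof (rule Bochner_Integration.integrable_bound[where f="\<lambda>x. 1 + (norm (eps 0 x))^2"])
    show "integrable M (\<lambda>x. 1 + (norm (eps 0 x))^2)" using int_e2 by simp
    show "(\<lambda>x. eps 0 x $ i) \<in> borel_measurable M" by (rule em)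
    show "AE x in M. norm (eps 0 x $ i) \<le> norm (1 + (norm (eps 0 x))^2)"
    proof (rule AE_I2)
      fix x
      have h: "0 \<le> (norm (eps 0 x) - 1)^2" by simp
      have "2 * norm (eps 0 x) \<le> 1 + (norm (eps 0 x))^2" using h by (simp add: power2_eq_square algebra_simps)
      then have "norm (eps 0 x) \<le> 1 + (norm (eps 0 x))^2" using norm_ge_zero[of "eps 0 x"] by linarith
      then show "norm (eps 0 x $ i) \<le> norm (1 + (norm (eps 0 x))^2)"
        using component_le_norm_cart[of "eps 0 x" i] by simp
    qed
  qed
  define Sig :: "real^'d^'d" where "Sig = (\<chi> i j. expectation (\<lambda>x. eps 0 x $ i * eps 0 x $ j))"
  define v where "v V x = F W0 (Z 0 x) - F V (Z 0 x)" for V x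
  define DV :: "_ \<Rightarrow> real^'d^'d" where "DV V = (\<chi> i j. expectation (\<lambda>x. v V x $ i * v V x $ j))" for V
  have vm: "(\<lambda>x. v V x $ i) \<in> borel_measurable M" for V i
    unfolding v_def by (intro borel_measurable_vec_nth' borel_measurable_diff measurable_compose[OF Z0m Fm])
  have vb: "\<exists>C. \<forall>x i. \<bar>v V x $ i\<bar> \<le> C" for V
  proof -
    obtain C1 where C1: "\<And>z i. \<bar>F W0 z $ i\<bar> \<le> C1" using Fb[of W0] by blast
    obtain C2 where C2: "\<And>z i. \<bar>F V z $ i\<bar> \<le> C2" using Fb[of V] by blast
    have "\<bar>v V x $ i\<bar> \<le> C1 + C2" for x i
      unfolding v_def using C1[of "Z 0 x" i] C2[of "Z 0 x" i] by simp
    then show ?thesis by blast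
  qed
  have int_v: "integrable M (\<lambda>x. v V x $ i)" for V i
  proof -
    obtain C where C: "\<And>x i. \<bar>v V x $ i\<bar> \<le> C" using vb[of V] by blast
    show ?thesis by (rule integrable_const_bound[where B=C]) (use C vm in auto)
  qed
  have int_vv: "integrable M (\<lambda>x. v V x $ i * v V x $ j)" for V i j
  proof -
    obtain C where C: "\<And>x i. \<bar>v V x $ i\<bar> \<le> C" using vb[of V] by blast
    have "\<bar>v V x $ i * v V x $ j\<bar> \<le> C * C" for x
      unfolding abs_mult by (intro mult_mono C) (use C[of x i] in auto)
    then show ?thesis by (intro integrable_const_bound[where B="C * C"] AE_I2 borel_measurable_times vm) auto
  qed
  have indVE: "indep_var borel (\<lambda>x. v V x $ i) borel (\<lambda>x. eps 0 x $ j)" for V i j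
  proof -
    have m1: "(\<lambda>z. (F W0 z - F V z) $ i) \<in> borel_measurable borel"
      by (intro borel_measurable_vec_nth' borel_measurable_diff Fm)
    have m2: "(\<lambda>e::real^'d. e $ j) \<in> borel_measurable borel"
      by (intro borel_measurable_vec_nth' measurable_ident_sets) simp
    from indep_from_product[OF Z0m E0m a(5) m1 m2] show ?thesis unfolding v_def by simp
  qed
  have int_ve: "integrable M (\<lambda>x. v V x $ i * eps 0 x $ j)" for V i j
    by (rule indep_var_integrable[OF indVE int_v int_e])
  have cross: "(\<integral>x. v V x $ i * eps 0 x $ j \<partial>M) = 0" for V i j
    using indep_var_lebesgue_integral[OF indVE int_v int_e] a(6) by simp
  have pop: "pop_cov M (F V) (Y 0) (Z 0) = Sig + DV V" for V
  proof -
    have "pop_cov M (F V) (Y 0) (Z 0) $ i $ j = Sig $ i $ j + DV V $ i $ j" for i j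
    proof -
      have "pop_cov M (F V) (Y 0) (Z 0) $ i $ j = (\<integral>x. (Y 0 x - F V (Z 0 x)) $ i * (Y 0 x - F V (Z 0 x)) $ j \<partial>M)"
        unfolding pop_cov_def by simp
      also have "\<dots> = (\<integral>x. v V x $ i * v V x $ j + v V x $ i * eps 0 x $ j + v V x $ j * eps 0 x $ i + eps 0 x $ i * eps 0 x $ j \<partial>M)"
      proof (rule Bochner_Integration.integral_cong[OF refl])
        fix x assume x: "x \<in> space M"
        have "Y 0 x - F V (Z 0 x) = v V x + eps 0 x" using a(9) x unfolding v_def F_def by auto
        then show "(Y 0 x - F V (Z 0 x)) $ i * (Y 0 x - F V (Z 0 x)) $ j = v V x $ i * v V x $ j + v V x $ i * eps 0 x $ j + v V x $ j * eps 0 x $ i + eps 0 x $ i * eps 0 x $ j"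
          by (simp add: algebra_simps)
      qed
      also have "\<dots> = (\<integral>x. v V x $ i * v V x $ j \<partial>M) + (\<integral>x. v V x $ i * eps 0 x $ j \<partial>M) + (\<integral>x. v V x $ j * eps 0 x $ i \<partial>M) + (\<integral>x. eps 0 x $ i * eps 0 x $ j \<partial>M)"
        using int_vv[of V i j] int_ve[of V i j] int_ve[of V j i] int_ee[of i j] by simp
      also have "(\<integral>x. v V x $ i * eps 0 x $ j \<partial>M) = 0" by (rule cross)
      also have "(\<integral>x. v V x $ j * eps 0 x $ i \<partial>M) = 0" by (rule cross)
      finally show ?thesis unfolding Sig_def DV_def by simp
    qed
    then show ?thesis by (simp add: vec_eq_iff)
  qed
  have Sig_pd: "pdm Sig"
    unfolding Sig_def by (rule psd_invertible_pd[OF gram_psdm[OF int_ee] a(8)])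
  have DV_psd: "psdm (DV V)" for V
    unfolding DV_def by (rule gram_psdm[OF int_vv])
  have detpos: "det (pop_cov M (F V) (Y 0) (Z 0)) > 0" for V
  proof -
    have "det Sig \<le> det (Sig + DV V)" by (rule det_psd_mono(1)[OF DV_psd Sig_pd])
    then show ?thesis unfolding pop using pdm_det_pos[OF Sig_pd] by linarith
  qed
  have conv: "AE x in M. (\<lambda>n. U_n (F V) Y Z n x) \<longlonglongrightarrow> ln (det (pop_cov M (F V) (Y 0) (Z 0)))" for V
  proof -
    define v' where "v' t x = F W0 (Z t x) - F V (Z t x)" for t x
    define h where "h i j p = ((\<lambda>z. F W0 z - F V z) (fst p) + snd p) $ i * ((\<lambda>z. F W0 z - F V z) (fst p) + snd p) $ j"
      for i j and p :: "(real^'p) \<times> (real^'d)"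
    have hm: "h i j \<in> borel_measurable borel" for i j
      unfolding h_def by (rule borel_measurable_continuous_onI[OF cont_h[OF continuous_on_diff[OF Fc Fc]]])
    have ent: "AE x in M. (\<lambda>n. emp_cov (F V) Y Z n x $ i $ j) \<longlonglongrightarrow> pop_cov M (F V) (Y 0) (Z 0) $ i $ j" for i j
    proof -
      have ind: "indep_vars (\<lambda>_. borel) (\<lambda>t x. h i j (P t x)) UNIV"
        unfolding P_def by (rule indep_vars_compose2[OF a(3), where Y="\<lambda>_. h i j"]) (rule hm)
      have dP: "distr M borel (P t) = distr M borel (P 0)" for t
        unfolding P_def using a(4) by simp
      have idd: "distr M borel (\<lambda>x. h i j (P t x)) = distr M borel (\<lambda>x. h i j (P 0 x))" for t
        by (rule idd_compose[OF rvP[of t] rvP[of 0] dP hm])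
      have hP: "h i j (P t x) = (v' t x $ i + eps t x $ i) * (v' t x $ j + eps t x $ j)" for t x
        unfolding h_def P_def v'_def by simp
      have int: "integrable M (\<lambda>x. h i j (P 0 x))"
      proof -
        obtain C where C: "\<And>x i. \<bar>v V x $ i\<bar> \<le> C" using vb[of V] by blast
        have v'0: "v' 0 x = v V x" for x unfolding v'_def v_def by simp
        show ?thesis
        proof (rule Bochner_Integration.integrable_bound[where f="\<lambda>x. 2 * C^2 + 2 * (norm (eps 0 x))^2"])
          show "integrable M (\<lambda>x. 2 * C^2 + 2 * (norm (eps 0 x))^2)" using int_e2 by simp
          show "(\<lambda>x. h i j (P 0 x)) \<in> borel_measurable M" using measurable_compose[OF rvP[of 0] hm] by (simp add: comp_def)
          show "AE x in M. norm (h i j (P 0 x)) \<le> norm (2 * C^2 + 2 * (norm (eps 0 x))^2)"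
          proof (rule AE_I2)
            fix x
            have b1: "\<bar>v V x $ k + eps 0 x $ k\<bar> \<le> C + norm (eps 0 x)" for k
              using C[of x k] component_le_norm_cart[of "eps 0 x" k] by linarith
            have "\<bar>h i j (P 0 x)\<bar> \<le> (C + norm (eps 0 x)) * (C + norm (eps 0 x))"
              unfolding hP v'0 abs_mult by (intro mult_mono b1) (use b1[of i] in auto)
            also have "\<dots> \<le> 2 * C^2 + 2 * (norm (eps 0 x))^2"
              using zero_le_square[of "C - norm (eps 0 x)"] by (simp add: power2_eq_square algebra_simps)
            finally show "norm (h i j (P 0 x)) \<le> norm (2 * C^2 + 2 * (norm (eps 0 x))^2)" by simp
          qed
        qed
      qed
      have lim: "AE x in M. (\<lambda>n. (\<Sum>t\<in>{1..n}. h i j (P t x)) / real n) \<longlonglongrightarrow> expectation (\<lambda>x. h i j (P 0 x))"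
        by (rule slln[OF ind idd int])
      have YF: "x \<in> space M \<Longrightarrow> Y t x - F V (Z t x) = v' t x + eps t x" for t x
        using a(9) unfolding v'_def F_def by auto
      have pe: "pop_cov M (F V) (Y 0) (Z 0) $ i $ j = expectation (\<lambda>x. h i j (P 0 x))"
        unfolding pop_cov_def vec_lambda_beta by (rule Bochner_Integration.integral_cong[OF refl]) (simp only: YF hP vector_add_component)
      show ?thesis using lim
      proof (rule AE_mp[OF _ AE_I2], intro impI)
        fix x assume x: "x \<in> space M"
          and L: "(\<lambda>n. (\<Sum>t\<in>{1..n}. h i j (P t x)) / real n) \<longlonglongrightarrow> expectation (\<lambda>x. h i j (P 0 x))"
        have "emp_cov (F V) Y Z n x $ i $ j = (\<Sum>t\<in>{1..n}. h i j (P t x)) / real n" for n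
          unfolding emp_cov_entry using x by (simp add: YF hP)
        then show "(\<lambda>n. emp_cov (F V) Y Z n x $ i $ j) \<longlonglongrightarrow> pop_cov M (F V) (Y 0) (Z 0) $ i $ j"
          using L unfolding pe by simp
      qed
    qed
    have "AE x in M. \<forall>i\<in>UNIV. \<forall>j\<in>UNIV. (\<lambda>n. emp_cov (F V) Y Z n x $ i $ j) \<longlonglongrightarrow> pop_cov M (F V) (Y 0) (Z 0) $ i $ j"
      by (intro AE_finite_allI finite ent)
    then show ?thesis
    proof eventually_elim
      case (elim x)
      have "(\<lambda>n. det (emp_cov (F V) Y Z n x)) \<longlonglongrightarrow> det (pop_cov M (F V) (Y 0) (Z 0))"
        by (rule tendsto_det) (use elim in auto)
      then show ?case unfolding U_n_def using detpos[of V] by (intro tendsto_ln) auto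
    qed
  qed
  have DW0: "DV W0 = 0" unfolding DV_def v_def by (simp add: vec_eq_iff)
  have K_eq: "K_contrast M (mlp \<sigma> W) (mlp \<sigma> W0) (Y 0) (Z 0) = ln (det (Sig + DV W)) - ln (det Sig)"
    unfolding K_contrast_def F_def[symmetric] pop DW0 by simp
  have dSig: "det Sig > 0" by (rule pdm_det_pos[OF Sig_pd])
  have mono: "det Sig \<le> det (Sig + DV W)" by (rule det_psd_mono(1)[OF DV_psd Sig_pd])
  have part1: "AE x in M. (\<lambda>n. U_n (mlp \<sigma> W) Y Z n x - U_n (mlp \<sigma> W0) Y Z n x)
            \<longlonglongrightarrow> K_contrast M (mlp \<sigma> W) (mlp \<sigma> W0) (Y 0) (Z 0)"
    using conv[of W] conv[of W0]
  proof eventually_elim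
    case (elim x)
    then show ?case unfolding K_contrast_def F_def by (intro tendsto_diff) auto
  qed
  have part2: "K_contrast M (mlp \<sigma> W) (mlp \<sigma> W0) (Y 0) (Z 0) \<ge> 0"
    unfolding K_eq using dSig mono by simp
  have part3: "K_contrast M (mlp \<sigma> W) (mlp \<sigma> W0) (Y 0) (Z 0) = 0 \<longleftrightarrow> (\<exists>g\<in>G. W = g W0)"
  proof
    assume "K_contrast M (mlp \<sigma> W) (mlp \<sigma> W0) (Y 0) (Z 0) = 0"
    then have "ln (det (Sig + DV W)) = ln (det Sig)" unfolding K_eq by simp
    then have "det (Sig + DV W) = det Sig" using dSig mono by simp
    then have D0: "DV W = 0" by (rule det_psd_mono(2)[OF DV_psd Sig_pd])
    have "AE x in M. \<forall>i\<in>UNIV. v W x $ i = 0"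
    proof (rule AE_finite_allI[OF finite])
      fix i
      have "DV W $ i $ i = 0" using D0 by simp
      then have "expectation (\<lambda>x. v W x $ i * v W x $ i) = 0" unfolding DV_def by simp
      then have "AE x in M. v W x $ i * v W x $ i = 0"
        using integral_nonneg_eq_0_iff_AE[OF int_vv[of W i i]] by simp
      then show "AE x in M. v W x $ i = 0" by eventually_elim simp
    qed
    then have "AE x in M. mlp \<sigma> W (Z 0 x) = mlp \<sigma> W0 (Z 0 x)"
    proof eventually_elim
      case (elim x)
      then have "v W x = 0" by (simp add: vec_eq_iff)
      then show ?case unfolding v_def F_def by simp
    qed
    then show "\<exists>g\<in>G. W = g W0" using a(17) a(18) by blast
  next
    assume "\<exists>g\<in>G. W = g W0"
    then obtain g where g: "g \<in> G" "W = g W0" by blast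
    have "mlp \<sigma> W = mlp \<sigma> W0"
    proof
      fix z show "mlp \<sigma> W z = mlp \<sigma> W0 z"
        unfolding g(2) using bspec[OF a(16) g(1)] by blast
    qed
    then show "K_contrast M (mlp \<sigma> W) (mlp \<sigma> W0) (Y 0) (Z 0) = 0" unfolding K_contrast_def by simp
  qed
  show ?thesis using part1 part2 part3 by blast
qed

end
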